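(* Let $(A,B)$ be a finite-dimensional odd-symmetric associative superalgebra over an algebraically closed field $\mathbb{K}$ of characteristic zero such that $A_{\bar 0}$ is a semi-simple $A_{\bar 0}$-bimodule. Then $$A=S_1\oplus\cdots\oplus S_n\oplus N\oplus \hat S_1\oplus\cdots\oplus\hat S_n\oplus\hat N,$$ where each $S_i$ is a simple two-sided ideal of $A_{\bar 0}$, $N=\mathrm{Ann}(A_{\bar 0})$, each $\hat S_i$ is an irreducible $A_{\bar 0}$-sub-bimodule of $A_{\bar 1}$, and $\hat N$ is an $A_{\bar 0}$-sub-bimodule of $A_{\bar 1}$ with $A_{\bar 0}\hat N=\{0\}=\hat N A_{\bar 0}$, with $A_{\bar 0}=S_1\oplus\cdots\oplus S_n\oplus N$ and $A_{\bar 1}=\hat S_1\oplus\cdots\oplus\hat S_n\oplus\hat N$. Moreover: (i) $\hat S_i\hat S_j=\{0\}=\hat S_j\hat S_i$ for $i\neq j$; (ii) $\hat S_i\hat S_i\in\{\{0\},S_i\}$ for all $i$; (iii) $\hat N\hat S_i=\{0\}=\hat S_i\hat N$ for all $i$; (iv) $\hat N\hat N\subseteq N$.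
   Context: A superalgebra is $\mathbb{Z}_2$-graded, $A=A_{\bar 0}\oplus A_{\bar 1}$, $A_\alpha A_\beta\subseteq A_{\alpha+\beta}$. An odd-symmetric structure on $A$ is a bilinear form $B$ with $B(A_{\bar 0},A_{\bar 0})=B(A_{\bar 1},A_{\bar 1})=0$ which is supersymmetric ($B(x,y)=(-1)^{|x||y|}B(y,x)$), associative ($B(xy,z)=B(x,yz)$) and non-degenerate. $A_{\bar 0}$ and $A_{\bar 1}$ are $A_{\bar 0}$-bimodules via left and right multiplication; a bimodule is semi-simple if every sub-bimodule has a complementary sub-bimodule, and irreducible if it is non-zero with no sub-bimodules other than $\{0\}$ and itself. $\mathrm{Ann}(A_{\bar 0})=\{x\in A_{\bar 0}: xA_{\bar 0}=A_{\bar 0}x=\{0\}\}$. *)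

theory Defs
  imports Main "HOL-Computational_Algebra.Polynomial"
begin

definition alg_closed :: "'k::field itself \<Rightarrow> bool" where
  "alg_closed _ \<longleftrightarrow> (\<forall>p :: 'k poly. degree p > 0 \<longrightarrow> (\<exists>x. poly p x = 0))"

text \<open>The vector space of the algebra is the whole type 'a, with scalar multiplication scale.\<close>

definition set_sum :: "'a::ab_group_add set \<Rightarrow> 'a set \<Rightarrow> 'a set" where
  "set_sum X Y = {x + y | x y. x \<in> X \<and> y \<in> Y}"

definition set_prod ::
  "('k::field \<Rightarrow> 'a::ab_group_add \<Rightarrow> 'a) \<Rightarrow> ('a \<Rightarrow> 'a \<Rightarrow> 'a) \<Rightarrow> 'a set \<Rightarrow> 'a set \<Rightarrow> 'a set" where
  "set_prod scale mul X Y = module.span scale {mul x y | x y. x \<in> X \<and> y \<in> Y}"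

definition sub_bimodule ::
  "('k::field \<Rightarrow> 'a::ab_group_add \<Rightarrow> 'a) \<Rightarrow> ('a \<Rightarrow> 'a \<Rightarrow> 'a) \<Rightarrow> 'a set \<Rightarrow> 'a set \<Rightarrow> 'a set \<Rightarrow> bool" where
  "sub_bimodule scale mul R M W \<longleftrightarrow>
     module.subspace scale W \<and> W \<subseteq> M \<and> (\<forall>a\<in>R. \<forall>w\<in>W. mul a w \<in> W \<and> mul w a \<in> W)"

definition semisimple_bimodule ::
  "('k::field \<Rightarrow> 'a::ab_group_add \<Rightarrow> 'a) \<Rightarrow> ('a \<Rightarrow> 'a \<Rightarrow> 'a) \<Rightarrow> 'a set \<Rightarrow> 'a set \<Rightarrow> bool" where
  "semisimple_bimodule scale mul R M \<longleftrightarrow>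
     (\<forall>W. sub_bimodule scale mul R M W \<longrightarrow>
        (\<exists>W'. sub_bimodule scale mul R M W' \<and> W \<inter> W' = {0} \<and> set_sum W W' = M))"

definition irreducible_sub_bimodule ::
  "('k::field \<Rightarrow> 'a::ab_group_add \<Rightarrow> 'a) \<Rightarrow> ('a \<Rightarrow> 'a \<Rightarrow> 'a) \<Rightarrow> 'a set \<Rightarrow> 'a set \<Rightarrow> 'a set \<Rightarrow> bool" where
  "irreducible_sub_bimodule scale mul R M W \<longleftrightarrow>
     sub_bimodule scale mul R M W \<and> W \<noteq> {0} \<and>
     (\<forall>V. sub_bimodule scale mul R W V \<longrightarrow> V = {0} \<or> V = W)"

definition simple_ideal ::
  "('k::field \<Rightarrow> 'a::ab_group_add \<Rightarrow> 'a) \<Rightarrow> ('a \<Rightarrow> 'a \<Rightarrow> 'a) \<Rightarrow> 'a set \<Rightarrow> 'a set \<Rightarrow> bool" where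
  "simple_ideal scale mul R S \<longleftrightarrow>
     sub_bimodule scale mul R R S \<and> set_prod scale mul S S \<noteq> {0} \<and>
     (\<forall>J. sub_bimodule scale mul S S J \<longrightarrow> J = {0} \<or> J = S)"

definition Ann :: "('a::zero \<Rightarrow> 'a \<Rightarrow> 'a) \<Rightarrow> 'a set \<Rightarrow> 'a set" where
  "Ann mul R = {x \<in> R. \<forall>a\<in>R. mul x a = 0 \<and> mul a x = 0}"

definition internal_direct_sum ::
  "('k::field \<Rightarrow> 'a::ab_group_add \<Rightarrow> 'a) \<Rightarrow> 'a set \<Rightarrow> 'i set \<Rightarrow> ('i \<Rightarrow> 'a set) \<Rightarrow> bool" where
  "internal_direct_sum scale M I W \<longleftrightarrow>
     finite I \<and> (\<forall>i\<in>I. module.subspace scale (W i)) \<and>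
     M = {(\<Sum>i\<in>I. f i) | f. \<forall>i\<in>I. f i \<in> W i} \<and>
     (\<forall>f. (\<forall>i\<in>I. f i \<in> W i) \<and> (\<Sum>i\<in>I. f i) = 0 \<longrightarrow> (\<forall>i\<in>I. f i = 0))"

definition fd_assoc_superalgebra ::
  "('k::field \<Rightarrow> 'a::ab_group_add \<Rightarrow> 'a) \<Rightarrow> ('a \<Rightarrow> 'a \<Rightarrow> 'a) \<Rightarrow> 'a set \<Rightarrow> 'a set \<Rightarrow> bool" where
  "fd_assoc_superalgebra scale mul A0 A1 \<longleftrightarrow>
     vector_space scale \<and>
     (\<exists>Bs. finite Bs \<and> module.span scale Bs = UNIV) \<and>
     (\<forall>x. Vector_Spaces.linear scale scale (mul x)) \<and>
     (\<forall>y. Vector_Spaces.linear scale scale (\<lambda>x. mul x y)) \<and>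
     (\<forall>x y z. mul (mul x y) z = mul x (mul y z)) \<and>
     module.subspace scale A0 \<and> module.subspace scale A1 \<and>
     A0 \<inter> A1 = {0} \<and> set_sum A0 A1 = UNIV \<and>
     (\<forall>x\<in>A0. \<forall>y\<in>A0. mul x y \<in> A0) \<and>
     (\<forall>x\<in>A0. \<forall>y\<in>A1. mul x y \<in> A1) \<and>
     (\<forall>x\<in>A1. \<forall>y\<in>A0. mul x y \<in> A1) \<and>
     (\<forall>x\<in>A1. \<forall>y\<in>A1. mul x y \<in> A0)"

definition odd_symmetric_structure ::
  "('k::field \<Rightarrow> 'a::ab_group_add \<Rightarrow> 'a) \<Rightarrow> ('a \<Rightarrow> 'a \<Rightarrow> 'a) \<Rightarrow> 'a set \<Rightarrow> 'a set \<Rightarrow> ('a \<Rightarrow> 'a \<Rightarrow> 'k) \<Rightarrow> bool" where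
  "odd_symmetric_structure scale mul A0 A1 B \<longleftrightarrow>
     (\<forall>x. Vector_Spaces.linear scale (*) (B x)) \<and>
     (\<forall>y. Vector_Spaces.linear scale (*) (\<lambda>x. B x y)) \<and>
     (\<forall>x\<in>A0. \<forall>y\<in>A0. B x y = 0) \<and> (\<forall>x\<in>A1. \<forall>y\<in>A1. B x y = 0) \<and>
     (\<forall>x\<in>A0. \<forall>y\<in>A0. B x y = B y x) \<and>
     (\<forall>x\<in>A0. \<forall>y\<in>A1. B x y = B y x) \<and>
     (\<forall>x\<in>A1. \<forall>y\<in>A0. B x y = B y x) \<and>
     (\<forall>x\<in>A1. \<forall>y\<in>A1. B x y = - B y x) \<and>
     (\<forall>x y z. B (mul x y) z = B x (mul y z)) \<and>
     (\<forall>x. (\<forall>y. B x y = 0) \<longrightarrow> x = 0) \<and>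
     (\<forall>y. (\<forall>x. B x y = 0) \<longrightarrow> y = 0)"

end

theory Submission
  imports Defs
begin


lemma vs_field: "vector_space ((*) :: 'k::field \<Rightarrow> 'k \<Rightarrow> 'k)"
  by unfold_locales (simp_all add: algebra_simps)

definition dproj :: "'i set \<Rightarrow> ('i \<Rightarrow> 'a::comm_monoid_add set) \<Rightarrow> 'i \<Rightarrow> 'a \<Rightarrow> 'a" where
  "dproj I W i x = (SOME f. (\<forall>i\<in>I. f i \<in> W i) \<and> x = (\<Sum>i\<in>I. f i)) i"


context vector_space begin

lemma ds_subspace:
  assumes ds: "internal_direct_sum scale M I W" shows "subspace M"
proof -
  have sub: "\<forall>i\<in>I. subspace (W i)" and M: "M = {\<Sum>i\<in>I. f i |f. \<forall>i\<in>I. f i \<in> W i}"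
    using ds unfolding internal_direct_sum_def by auto
  have "0 \<in> M" unfolding M using sub by (auto intro!: exI[of _ "\<lambda>i. 0"] simp: subspace_0)
  moreover have "x + y \<in> M" if xy: "x \<in> M" "y \<in> M" for x y
  proof -
    obtain f where "x = (\<Sum>i\<in>I. f i)" "\<forall>i\<in>I. f i \<in> W i" using xy(1) unfolding M by blast
    moreover obtain g where "y = (\<Sum>i\<in>I. g i)" "\<forall>i\<in>I. g i \<in> W i" using xy(2) unfolding M by blast
    ultimately show ?thesis unfolding M using sub
      by (auto intro!: exI[of _ "\<lambda>i. f i + g i"] simp: sum.distrib subspace_add)
  qed
  moreover have "scale c x \<in> M" if xM: "x \<in> M" for c x
  proof -
    obtain f where "x = (\<Sum>i\<in>I. f i)" "\<forall>i\<in>I. f i \<in> W i" using xM unfolding M by blast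
    then show ?thesis unfolding M using sub
      by (auto intro!: exI[of _ "\<lambda>i. scale c (f i)"] simp: scale_sum_right subspace_scale)
  qed
  ultimately show ?thesis unfolding subspace_def by blast
qed

lemma ds_unique:
  assumes "internal_direct_sum scale M I W" "\<forall>i\<in>I. f i \<in> W i" "\<forall>i\<in>I. g i \<in> W i"
    "(\<Sum>i\<in>I. f i) = (\<Sum>i\<in>I. g i)" "i \<in> I"
  shows "f i = g i"
proof -
  have "\<forall>i\<in>I. f i - g i \<in> W i" using assms(1-3) unfolding internal_direct_sum_def
    by (auto intro: subspace_diff)
  moreover have "(\<Sum>i\<in>I. f i - g i) = 0" using assms(4) by (simp add: sum_subtractf)
  ultimately have "f i - g i = 0" using assms(1,5) unfolding internal_direct_sum_def
    by (elim conjE allE[of _ "\<lambda>i. f i - g i"]) auto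
  then show ?thesis by simp
qed

lemma ds_mem: "internal_direct_sum scale M I W \<Longrightarrow> \<forall>i\<in>I. f i \<in> W i \<Longrightarrow> (\<Sum>i\<in>I. f i) \<in> M"
  unfolding internal_direct_sum_def by blast

lemma ds_in: "internal_direct_sum scale M I W \<Longrightarrow> i \<in> I \<Longrightarrow> W i \<subseteq> M"
proof
  fix w assume ds: "internal_direct_sum scale M I W" and i: "i \<in> I" and w: "w \<in> W i"
  have "\<forall>j\<in>I. (if j = i then w else 0) \<in> W j"
    using ds i w by (auto simp: internal_direct_sum_def subspace_0)
  then have "(\<Sum>j\<in>I. if j = i then w else 0) \<in> M" by (rule ds_mem[OF ds])
  then show "w \<in> M" using i ds by (simp add: internal_direct_sum_def)
qed

lemma ds_decomp:
  assumes "internal_direct_sum scale M I W" "x \<in> M"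
  obtains f where "\<forall>i\<in>I. f i \<in> W i" "x = (\<Sum>i\<in>I. f i)"
  using assms unfolding internal_direct_sum_def by blast

lemma proj_spec:
  assumes ds: "internal_direct_sum scale M I W" and x: "x \<in> M"
  shows "\<forall>i\<in>I. dproj I W i x \<in> W i" "x = (\<Sum>i\<in>I. dproj I W i x)"
proof -
  have ex: "\<exists>f. (\<forall>i\<in>I. f i \<in> W i) \<and> x = (\<Sum>i\<in>I. f i)"
    using ds x unfolding internal_direct_sum_def by blast
  define F where "F = (SOME f. (\<forall>i\<in>I. f i \<in> W i) \<and> x = (\<Sum>i\<in>I. f i))"
  have FP: "(\<forall>i\<in>I. F i \<in> W i) \<and> x = (\<Sum>i\<in>I. F i)" unfolding F_def by (rule someI_ex[OF ex])
  have "dproj I W i x = F i" for i unfolding dproj_def F_def by simp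
  then show "\<forall>i\<in>I. dproj I W i x \<in> W i" "x = (\<Sum>i\<in>I. dproj I W i x)" using FP by auto
qed

lemma proj_eq:
  assumes ds: "internal_direct_sum scale M I W" and f: "\<forall>i\<in>I. f i \<in> W i" and i: "i \<in> I"
  shows "dproj I W i (\<Sum>i\<in>I. f i) = f i"
proof -
  have x: "(\<Sum>i\<in>I. f i) \<in> M" by (rule ds_mem[OF ds f])
  show ?thesis using proj_spec[OF ds x] f i
    by (intro ds_unique[OF ds, of "\<lambda>i. dproj I W i (\<Sum>i\<in>I. f i)" f]) auto
qed

lemma proj_W:
  assumes ds: "internal_direct_sum scale M I W" and i: "i \<in> I" and j: "j \<in> I" and w: "w \<in> W j"
  shows "dproj I W i w = (if i = j then w else 0)"
proof -
  have f: "\<forall>k\<in>I. (if k = j then w else 0) \<in> W k"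
    using ds j w by (auto simp: internal_direct_sum_def subspace_0)
  have "(\<Sum>k\<in>I. if k = j then w else 0) = w" using j ds by (simp add: internal_direct_sum_def)
  with proj_eq[OF ds f i] show ?thesis by simp
qed

lemma proj_add:
  assumes ds: "internal_direct_sum scale M I W" and x: "x \<in> M" and y: "y \<in> M" and i: "i \<in> I"
  shows "dproj I W i (x + y) = dproj I W i x + dproj I W i y"
proof -
  have sub: "\<forall>i\<in>I. subspace (W i)" using ds by (simp add: internal_direct_sum_def)
  have "x + y = (\<Sum>i\<in>I. dproj I W i x + dproj I W i y)"
    using proj_spec[OF ds x] proj_spec[OF ds y] by (simp add: sum.distrib)
  moreover have "\<forall>i\<in>I. dproj I W i x + dproj I W i y \<in> W i"
    using proj_spec[OF ds x] proj_spec[OF ds y] sub by (auto intro: subspace_add)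
  ultimately show ?thesis using proj_eq[OF ds _ i, of "\<lambda>i. dproj I W i x + dproj I W i y"] by simp
qed

lemma proj_scale:
  assumes ds: "internal_direct_sum scale M I W" and x: "x \<in> M" and i: "i \<in> I"
  shows "dproj I W i (scale c x) = scale c (dproj I W i x)"
proof -
  have sub: "\<forall>i\<in>I. subspace (W i)" using ds by (simp add: internal_direct_sum_def)
  have "scale c x = (\<Sum>i\<in>I. scale c (dproj I W i x))"
    using proj_spec[OF ds x] by (simp add: scale_sum_right[symmetric])
  moreover have "\<forall>i\<in>I. scale c (dproj I W i x) \<in> W i"
    using proj_spec[OF ds x] sub by (auto intro: subspace_scale)
  ultimately show ?thesis using proj_eq[OF ds _ i, of "\<lambda>i. scale c (dproj I W i x)"] by simp
qed

lemma ds_empty: "internal_direct_sum scale {0} {} W"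
  by (simp add: internal_direct_sum_def)

lemma ds_single: "subspace (W i) \<Longrightarrow> internal_direct_sum scale (W i) {i} W"
  unfolding internal_direct_sum_def
  by (auto intro: exI[of _ "\<lambda>_. x" for x])

lemma ds_cong: "internal_direct_sum scale M I W \<Longrightarrow> (\<And>i. i \<in> I \<Longrightarrow> W i = W' i) \<Longrightarrow>
   internal_direct_sum scale M I W'"
  unfolding internal_direct_sum_def by auto

end

context vector_space begin
lemma ds_union:
  assumes d1: "internal_direct_sum scale M1 I1 W" and d2: "internal_direct_sum scale M2 I2 W"
    and dis: "I1 \<inter> I2 = {}" and int: "M1 \<inter> M2 = {0}" and M: "M = set_sum M1 M2"
  shows "internal_direct_sum scale M (I1 \<union> I2) W"
proof -
  have f1: "finite I1" and f2: "finite I2" using d1 d2 by (auto simp: internal_direct_sum_def)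
  have s2: "subspace M2" by (rule ds_subspace[OF d2])
  have "M = {\<Sum>i\<in>I1 \<union> I2. f i |f. \<forall>i\<in>I1 \<union> I2. f i \<in> W i}"
  proof safe
    fix x assume "x \<in> M"
    then obtain a b where ab: "x = a + b" "a \<in> M1" "b \<in> M2" using M by (auto simp: set_sum_def)
    obtain f where f: "\<forall>i\<in>I1. f i \<in> W i" "a = (\<Sum>i\<in>I1. f i)" using ds_decomp[OF d1 ab(2)] by blast
    obtain g where g: "\<forall>i\<in>I2. g i \<in> W i" "b = (\<Sum>i\<in>I2. g i)" using ds_decomp[OF d2 ab(3)] by blast
    let ?h = "\<lambda>i. if i \<in> I1 then f i else g i"
    have h1: "(\<Sum>i\<in>I1. ?h i) = a" using f by simp
    have h2: "(\<Sum>i\<in>I2. ?h i) = b" unfolding g(2) using dis by (intro sum.cong) auto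
    have "x = (\<Sum>i\<in>I1 \<union> I2. ?h i)"
      using ab h1 h2 dis f1 f2 by (simp add: sum.union_disjoint)
    moreover have "\<forall>i\<in>I1 \<union> I2. ?h i \<in> W i" using f g by auto
    ultimately show "\<exists>f. x = (\<Sum>i\<in>I1 \<union> I2. f i) \<and> (\<forall>i\<in>I1 \<union> I2. f i \<in> W i)" by blast
  next
    fix f assume f: "\<forall>i\<in>I1 \<union> I2. f i \<in> W i"
    have "(\<Sum>i\<in>I1 \<union> I2. f i) = (\<Sum>i\<in>I1. f i) + (\<Sum>i\<in>I2. f i)"
      using dis f1 f2 by (simp add: sum.union_disjoint)
    moreover have "(\<Sum>i\<in>I1. f i) \<in> M1" using f by (intro ds_mem[OF d1]) auto
    moreover have "(\<Sum>i\<in>I2. f i) \<in> M2" using f by (intro ds_mem[OF d2]) auto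
    ultimately show "(\<Sum>i\<in>I1 \<union> I2. f i) \<in> M" using M by (auto simp: set_sum_def)
  qed
  moreover have "\<forall>i\<in>I1 \<union> I2. f i = 0" if f: "\<forall>i\<in>I1 \<union> I2. f i \<in> W i" "(\<Sum>i\<in>I1 \<union> I2. f i) = 0" for f
  proof -
    have e: "(\<Sum>i\<in>I1. f i) + (\<Sum>i\<in>I2. f i) = 0"
      using f dis f1 f2 by (simp add: sum.union_disjoint)
    have a: "(\<Sum>i\<in>I1. f i) \<in> M1" using f by (intro ds_mem[OF d1]) auto
    have b: "(\<Sum>i\<in>I2. f i) \<in> M2" using f by (intro ds_mem[OF d2]) auto
    have "(\<Sum>i\<in>I1. f i) = - (\<Sum>i\<in>I2. f i)" using e by (simp add: eq_neg_iff_add_eq_0)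
    then have "(\<Sum>i\<in>I1. f i) \<in> M2" using b s2 subspace_neg by metis
    then have z1: "(\<Sum>i\<in>I1. f i) = 0" using a int by blast
    then have z2: "(\<Sum>i\<in>I2. f i) = 0" using e by simp
    show ?thesis using z1 z2 f d1 d2 unfolding internal_direct_sum_def by blast
  qed
  ultimately show ?thesis using d1 d2 f1 f2 unfolding internal_direct_sum_def by auto
qed

lemma ds_reindex:
  assumes ds: "internal_direct_sum scale M I W" and h: "bij_betw h J I"
  shows "internal_direct_sum scale M J (\<lambda>j. W (h j))"
proof -
  have fJ: "finite J" using ds h bij_betw_finite by (auto simp: internal_direct_sum_def)
  have inj: "inj_on h J" and im: "h ` J = I" using h by (auto simp: bij_betw_def)
  let ?g = "inv_into J h"
  have gh: "\<And>j. j \<in> J \<Longrightarrow> ?g (h j) = j" using inj by (simp add: inv_into_f_f)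
  have hg: "\<And>i. i \<in> I \<Longrightarrow> h (?g i) = i" using im by (auto simp: f_inv_into_f)
  have gJ: "\<And>i. i \<in> I \<Longrightarrow> ?g i \<in> J" using im by (auto intro: inv_into_into)
  have sumeq: "(\<Sum>j\<in>J. f (h j)) = (\<Sum>i\<in>I. f i)" for f :: "_ \<Rightarrow> 'b"
    using sum.reindex_bij_betw[OF h] .
  have "M = {\<Sum>j\<in>J. f j |f. \<forall>j\<in>J. f j \<in> W (h j)}"
  proof safe
    fix x assume "x \<in> M"
    then obtain f where f: "\<forall>i\<in>I. f i \<in> W i" "x = (\<Sum>i\<in>I. f i)" using ds_decomp[OF ds] by blast
    have "x = (\<Sum>j\<in>J. f (h j))" using f sumeq by simp
    moreover have "\<forall>j\<in>J. f (h j) \<in> W (h j)" using f im by auto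
    ultimately show "\<exists>g. x = (\<Sum>j\<in>J. g j) \<and> (\<forall>j\<in>J. g j \<in> W (h j))" by blast
  next
    fix f assume f: "\<forall>j\<in>J. f j \<in> W (h j)"
    have "(\<Sum>j\<in>J. f j) = (\<Sum>j\<in>J. f (?g (h j)))" using gh by (intro sum.cong) auto
    also have "\<dots> = (\<Sum>i\<in>I. f (?g i))" by (rule sumeq)
    finally have e: "(\<Sum>j\<in>J. f j) = (\<Sum>i\<in>I. f (?g i))" .
    have "\<forall>i\<in>I. f (?g i) \<in> W i" using f gJ hg by metis
    then show "(\<Sum>j\<in>J. f j) \<in> M" unfolding e by (rule ds_mem[OF ds])
  qed
  moreover have "\<forall>j\<in>J. f j = 0" if f: "\<forall>j\<in>J. f j \<in> W (h j)" "(\<Sum>j\<in>J. f j) = 0" for f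
  proof -
    have "(\<Sum>j\<in>J. f j) = (\<Sum>j\<in>J. f (?g (h j)))" using gh by (intro sum.cong) auto
    also have "\<dots> = (\<Sum>i\<in>I. f (?g i))" by (rule sumeq)
    finally have e: "(\<Sum>i\<in>I. f (?g i)) = 0" using f by simp
    have "\<forall>i\<in>I. f (?g i) \<in> W i" using f gJ hg by metis
    then have "\<forall>i\<in>I. f (?g i) = 0" using e ds unfolding internal_direct_sum_def
      by (elim conjE allE[of _ "\<lambda>i. f (?g i)"]) auto
    then show ?thesis using im gh by force
  qed
  ultimately show ?thesis using fJ ds im unfolding internal_direct_sum_def by auto
qed

end


context finite_dimensional_vector_space begin

lemma vsp_self: "vector_space_pair scale scale"
  by (simp add: vector_space_pair_def vector_space_axioms)

lemma vsp_field: "vector_space_pair scale ((*) :: 'a \<Rightarrow> 'a \<Rightarrow> 'a)"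
  by (simp add: vector_space_pair_def vs_field vector_space_axioms)

lemma pairing_psi:
  fixes P :: "'b \<Rightarrow> 'b \<Rightarrow> 'a"
  assumes lP1: "\<And>x. Vector_Spaces.linear scale (*) (P x)"
    and lP2: "\<And>y. Vector_Spaces.linear scale (*) (\<lambda>x. P x y)"
    and X: "subspace X" and Y: "subspace Y"
    and nd1: "\<forall>y\<in>Y. (\<forall>x\<in>X. P x y = 0) \<longrightarrow> y = 0"
    and E: "E \<subseteq> X" "independent E" "X \<subseteq> span E"
  defines "\<Psi> \<equiv> \<lambda>y. (\<Sum>e\<in>E. scale (P e y) e)"
  shows "Vector_Spaces.linear scale scale \<Psi>" "\<Psi> ` Y \<subseteq> X" "inj_on \<Psi> Y"
    "dim (\<Psi> ` Y) = dim Y" "dim Y \<le> dim X"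
proof -
  have fE: "finite E" using E(2) finiteI_independent by blast
  show lin: "Vector_Spaces.linear scale scale \<Psi>"
    unfolding Vector_Spaces.linear_iff
  proof (intro conjI allI)
    show "vector_space scale" by unfold_locales
    show "vector_space scale" by unfold_locales
    fix y y' show "\<Psi> (y + y') = \<Psi> y + \<Psi> y'"
      unfolding \<Psi>_def using vector_space_pair.linear_add[OF vsp_field lP1]
      by (simp add: scale_left_distrib sum.distrib)
  next
    fix c y show "\<Psi> (scale c y) = scale c (\<Psi> y)"
      unfolding \<Psi>_def using vector_space_pair.linear_scale[OF vsp_field lP1]
      by (simp add: scale_sum_right)
  qed
  have inY: "\<Psi> y \<in> X" for y
    unfolding \<Psi>_def using E(1) X by (auto intro!: subspace_sum subspace_scale)
  then show "\<Psi> ` Y \<subseteq> X" by auto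
  have z: "y = 0" if y: "y \<in> Y" and py: "\<Psi> y = 0" for y
  proof -
    have "\<forall>e\<in>E. P e y = 0" using E(2) py fE unfolding \<Psi>_def independent_explicit
      by (elim conjE allE[of _ "\<lambda>e. P e y"]) auto
    then have "\<forall>x\<in>span E. P x y = 0"
      using span_minimal[of E "{x. P x y = 0}"]
        vector_space_pair.linear_subspace_kernel[OF vsp_field lP2[of y]]
      by auto
    then show "y = 0" using nd1 y E(3) by blast
  qed
  interpret p1: finite_dimensional_vector_space_pair_1 scale Basis scale
    by unfold_locales
  show inj: "inj_on \<Psi> Y"
    using z p1.linear_inj_on_iff_eq_0[OF lin Y] by blast
  have sY: "span Y = Y" using Y by simp
  show d: "dim (\<Psi> ` Y) = dim Y"
    using p1.dim_image_eq[OF lin, of Y] inj unfolding sY by simp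
  have "dim (\<Psi> ` Y) \<le> dim X" using inY by (intro dim_subset) auto
  with d show "dim Y \<le> dim X" by simp
qed

lemma pairing_surj:
  fixes P :: "'b \<Rightarrow> 'b \<Rightarrow> 'a"
  assumes lP1: "\<And>x. Vector_Spaces.linear scale (*) (P x)"
    and lP2: "\<And>y. Vector_Spaces.linear scale (*) (\<lambda>x. P x y)"
    and X: "subspace X" and Y: "subspace Y"
    and nd1: "\<And>y. y \<in> Y \<Longrightarrow> (\<forall>x\<in>X. P x y = 0) \<Longrightarrow> y = 0"
    and nd2: "\<And>x. x \<in> X \<Longrightarrow> (\<forall>y\<in>Y. P x y = 0) \<Longrightarrow> x = 0"
    and phi_add: "\<And>x x'. x\<in>X \<Longrightarrow> x'\<in>X \<Longrightarrow> \<phi> (x+x') = \<phi> x + \<phi> x'"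
    and phi_scale: "\<And>c x. x \<in> X \<Longrightarrow> \<phi> (scale c x) = c * \<phi> x"
  shows "\<exists>y\<in>Y. \<forall>x\<in>X. P x y = \<phi> x"
proof -
  obtain E where E: "E \<subseteq> X" "independent E" "X \<subseteq> span E"
    using basis_exists[of X] by metis
  obtain F where F: "F \<subseteq> Y" "independent F" "Y \<subseteq> span F"
    using basis_exists[of Y] by metis
  have fE: "finite E" using E(2) finiteI_independent by blast
  have dXY: "dim X \<le> dim Y"
    by (rule pairing_psi(5)[of "\<lambda>x y. P y x" Y X F, OF lP2 lP1 Y X _ F]) (use nd2 in blast)
  define \<Psi> where "\<Psi> = (\<lambda>y. (\<Sum>e\<in>E. scale (P e y) e))"
  have nd1': "\<forall>y\<in>Y. (\<forall>x\<in>X. P x y = 0) \<longrightarrow> y = 0" using nd1 by blast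
  note psi = pairing_psi[OF lP1 lP2 X Y nd1' E, folded \<Psi>_def]
  have sub: "subspace (\<Psi> ` Y)" using vector_space_pair.linear_subspace_image[OF vsp_self psi(1) Y] .
  have eq: "\<Psi> ` Y = X"
    using subspace_dim_equal[OF sub X psi(2)] psi(4) dXY by simp
  define x0 where "x0 = (\<Sum>e\<in>E. scale (\<phi> e) e)"
  have "x0 \<in> X" unfolding x0_def using E(1) X by (auto intro!: subspace_sum subspace_scale)
  then have "x0 \<in> \<Psi> ` Y" using eq by simp
  then obtain y where y: "y \<in> Y" "\<Psi> y = x0" by (elim imageE) simp
  have "(\<Sum>e\<in>E. scale (P e y - \<phi> e) e) = 0"
    using y(2) unfolding \<Psi>_def x0_def by (simp add: scale_left_diff_distrib sum_subtractf)
  then have pe: "\<forall>e\<in>E. P e y = \<phi> e" using E(2) fE unfolding independent_explicit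
    by (elim conjE allE[of _ "\<lambda>e. P e y - \<phi> e"]) auto
  have sE: "span E \<subseteq> X" using span_minimal[OF E(1) X] .
  have "x \<in> X \<and> P x y = \<phi> x" if "x \<in> span E" for x
    using that
  proof (induction rule: span_induct_alt)
    case base
    have "\<phi> (scale 0 0) = 0 * \<phi> 0" using phi_scale[of 0 0] X subspace_0 by blast
    then have "\<phi> 0 = 0" by simp
    then show ?case using X subspace_0 vector_space_pair.linear_0[OF vsp_field lP2[of y]] by auto
  next
    case (step c x z)
    have xX: "x \<in> X" using step E(1) by auto
    have pl: "P (scale c x + z) y = c * P x y + P z y"
      using vector_space_pair.linear_add[OF vsp_field lP2[of y]]
        vector_space_pair.linear_scale[OF vsp_field lP2[of y]] by simp
    have zX: "z \<in> X" using step by simp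
    have cx: "scale c x \<in> X" using subspace_scale[OF X xX] .
    have sX: "scale c x + z \<in> X" using subspace_add[OF X cx zX] .
    moreover have "\<phi> (scale c x + z) = c * \<phi> x + \<phi> z"
      using phi_add[OF cx zX] phi_scale[OF xX] by simp
    ultimately show ?case using step(1,2) pe xX pl by simp
  qed
  then show ?thesis using y(1) E(3) by (intro bexI[of _ y]) auto
qed

end


context finite_dimensional_vector_space begin

lemma sep_functional:
  assumes V: "subspace V" and z: "z \<notin> V"
  shows "\<exists>\<psi>. Vector_Spaces.linear scale (*) \<psi> \<and> (\<forall>v\<in>V. \<psi> v = 0) \<and> \<psi> z = 1"
proof -
  obtain BV where BV: "BV \<subseteq> V" "independent BV" "V \<subseteq> span BV"
    using basis_exists[of V] by metis
  have sV: "span BV \<subseteq> V" using span_minimal[OF BV(1) V] .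
  have zs: "z \<notin> span BV" using z sV by blast
  have ind: "independent (insert z BV)" using independent_insertI[OF zs BV(2)] .
  obtain g where g: "Vector_Spaces.linear scale (*) g" "\<forall>x\<in>insert z BV. g x = (if x = z then 1 else 0)"
    using vector_space_pair.linear_independent_extend[OF vsp_field ind, of "\<lambda>x. if x = z then 1 else 0"] by blast
  have zB: "z \<notin> BV" using z BV(1) by blast
  have "\<forall>v\<in>V. g v = 0"
  proof
    fix v assume "v \<in> V"
    then have "v \<in> span BV" using BV(3) by blast
    moreover have "\<And>x. x \<in> BV \<Longrightarrow> g x = 0" using g(2) zB by force
    ultimately show "g v = 0" using vector_space_pair.linear_eq_0_on_span[OF vsp_field g(1)] by blast
  qed
  then show ?thesis using g by (intro exI[of _ g]) auto
qed

end

lemma additive_sum: "(\<And>x y. f (x + y) = f x + f y) \<Longrightarrow> f (sum g A) = (\<Sum>x\<in>A. f (g x))"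
  for f :: "'a::ab_group_add \<Rightarrow> 'b::ab_group_add"
  by (rule additive.sum) (rule additive.intro)

locale osa = finite_dimensional_vector_space scale Bas
  for scale :: "'k::field \<Rightarrow> 'a::ab_group_add \<Rightarrow> 'a" and Bas +
  fixes mul :: "'a \<Rightarrow> 'a \<Rightarrow> 'a" and A0 A1 :: "'a set" and B :: "'a \<Rightarrow> 'a \<Rightarrow> 'k"
  assumes sa: "fd_assoc_superalgebra scale mul A0 A1"
    and os: "odd_symmetric_structure scale mul A0 A1 B"
    and ss: "semisimple_bimodule scale mul A0 A0"
begin

lemma linL: "Vector_Spaces.linear scale scale (mul x)" using sa by (simp add: fd_assoc_superalgebra_def)
lemma linR: "Vector_Spaces.linear scale scale (\<lambda>x. mul x y)" using sa by (simp add: fd_assoc_superalgebra_def)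
lemma assoc: "mul (mul x y) z = mul x (mul y z)" using sa by (simp add: fd_assoc_superalgebra_def)
lemma subA0: "subspace A0" using sa by (simp add: fd_assoc_superalgebra_def)
lemma subA1: "subspace A1" using sa by (simp add: fd_assoc_superalgebra_def)
lemma A01: "A0 \<inter> A1 = {0}" using sa by (simp add: fd_assoc_superalgebra_def)
lemma A01sum: "set_sum A0 A1 = UNIV" using sa by (simp add: fd_assoc_superalgebra_def)
lemma m00: "x \<in> A0 \<Longrightarrow> y \<in> A0 \<Longrightarrow> mul x y \<in> A0" using sa by (simp add: fd_assoc_superalgebra_def)
lemma m01: "x \<in> A0 \<Longrightarrow> y \<in> A1 \<Longrightarrow> mul x y \<in> A1" using sa by (simp add: fd_assoc_superalgebra_def)
lemma m10: "x \<in> A1 \<Longrightarrow> y \<in> A0 \<Longrightarrow> mul x y \<in> A1" using sa by (simp add: fd_assoc_superalgebra_def)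
lemma m11: "x \<in> A1 \<Longrightarrow> y \<in> A1 \<Longrightarrow> mul x y \<in> A0" using sa by (simp add: fd_assoc_superalgebra_def)

lemma BL1: "Vector_Spaces.linear scale (*) (B x)" using os by (simp add: odd_symmetric_structure_def)
lemma BL2: "Vector_Spaces.linear scale (*) (\<lambda>x. B x y)" using os by (simp add: odd_symmetric_structure_def)
lemma B00: "x \<in> A0 \<Longrightarrow> y \<in> A0 \<Longrightarrow> B x y = 0" using os by (simp add: odd_symmetric_structure_def)
lemma B11: "x \<in> A1 \<Longrightarrow> y \<in> A1 \<Longrightarrow> B x y = 0" using os by (simp add: odd_symmetric_structure_def)
lemma Bsym: "x \<in> A0 \<Longrightarrow> y \<in> A1 \<Longrightarrow> B x y = B y x" using os by (simp add: odd_symmetric_structure_def)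
lemma Bassoc: "B (mul x y) z = B x (mul y z)" using os by (simp add: odd_symmetric_structure_def)
lemma ndl: "(\<And>y. B x y = 0) \<Longrightarrow> x = 0" using os by (simp add: odd_symmetric_structure_def)
lemma ndr: "(\<And>x. B x y = 0) \<Longrightarrow> y = 0" using os by (simp add: odd_symmetric_structure_def)

lemma mul_add1: "mul (x + y) z = mul x z + mul y z"
  using vector_space_pair.linear_add[OF vsp_self linR] by blast
lemma mul_add2: "mul x (y + z) = mul x y + mul x z"
  using vector_space_pair.linear_add[OF vsp_self linL] by blast
lemma mul_zero1[simp]: "mul 0 z = 0"
  using vector_space_pair.linear_0[OF vsp_self linR] by blast
lemma mul_zero2[simp]: "mul x 0 = 0"
  using vector_space_pair.linear_0[OF vsp_self linL] by blast
lemma mul_scale1: "mul (scale c x) y = scale c (mul x y)"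
  using vector_space_pair.linear_scale[OF vsp_self linR] by blast
lemma mul_scale2: "mul x (scale c y) = scale c (mul x y)"
  using vector_space_pair.linear_scale[OF vsp_self linL] by blast
lemma mul_sum1: "mul (sum f I) z = (\<Sum>i\<in>I. mul (f i) z)"
  using vector_space_pair.linear_sum[OF vsp_self linR] by blast
lemma mul_sum2: "mul x (sum f I) = (\<Sum>i\<in>I. mul x (f i))"
  using vector_space_pair.linear_sum[OF vsp_self linL] by blast
lemma B_add1: "B (x + y) z = B x z + B y z"
  using vector_space_pair.linear_add[OF vsp_field BL2] by blast
lemma B_add2: "B x (y + z) = B x y + B x z"
  using vector_space_pair.linear_add[OF vsp_field BL1] by blast
lemma B_zero1[simp]: "B 0 z = 0"
  using vector_space_pair.linear_0[OF vsp_field BL2] by blast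
lemma B_zero2[simp]: "B x 0 = 0"
  using vector_space_pair.linear_0[OF vsp_field BL1] by blast
lemma B_scale1: "B (scale c x) y = c * B x y"
  using vector_space_pair.linear_scale[OF vsp_field BL2] by blast
lemma B_scale2: "B x (scale c y) = c * B x y"
  using vector_space_pair.linear_scale[OF vsp_field BL1] by blast
lemma B_sum1: "B (sum f I) z = (\<Sum>i\<in>I. B (f i) z)"
  using vector_space_pair.linear_sum[OF vsp_field BL2] by blast
lemma B_sum2: "B x (sum f I) = (\<Sum>i\<in>I. B x (f i))"
  using vector_space_pair.linear_sum[OF vsp_field BL1] by blast
lemma B_diff2: "B x (y - z) = B x y - B x z"
  using vector_space_pair.linear_diff[OF vsp_field BL1] by blast

lemma decomp01: obtains x0 x1 where "x0 \<in> A0" "x1 \<in> A1" "x = x0 + x1"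
  using A01sum unfolding set_sum_def by blast

lemma ndA1: "y \<in> A1 \<Longrightarrow> (\<And>x. x \<in> A0 \<Longrightarrow> B x y = 0) \<Longrightarrow> y = 0"
proof (rule ndr)
  fix x assume y: "y \<in> A1" and h: "\<And>x. x \<in> A0 \<Longrightarrow> B x y = 0"
  obtain x0 x1 where "x0 \<in> A0" "x1 \<in> A1" "x = x0 + x1" by (rule decomp01)
  then show "B x y = 0" using h y B11 by (simp add: B_add1)
qed

lemma ndA0: "x \<in> A0 \<Longrightarrow> (\<And>y. y \<in> A1 \<Longrightarrow> B x y = 0) \<Longrightarrow> x = 0"
proof (rule ndl)
  fix y assume x: "x \<in> A0" and h: "\<And>y. y \<in> A1 \<Longrightarrow> B x y = 0"
  obtain y0 y1 where "y0 \<in> A0" "y1 \<in> A1" "y = y0 + y1" by (rule decomp01)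
  then show "B x y = 0" using h x B00 by (simp add: B_add2)
qed

end


context osa begin

abbreviation ide where "ide W \<equiv> sub_bimodule scale mul A0 A0 W"

lemma ideD: assumes "ide W"
  shows "subspace W" "W \<subseteq> A0" "\<And>a w. a \<in> A0 \<Longrightarrow> w \<in> W \<Longrightarrow> mul a w \<in> W"
    "\<And>a w. a \<in> A0 \<Longrightarrow> w \<in> W \<Longrightarrow> mul w a \<in> W"
  using assms unfolding sub_bimodule_def by auto

lemma ds_disj:
  assumes ds: "internal_direct_sum scale M I W" and i: "i \<in> I" and j: "j \<in> I" and ij: "i \<noteq> j"
    and xi: "x \<in> W i" and xj: "x \<in> W j"
  shows "x = 0"
proof -
  define f where "f = (\<lambda>k. if k = i then x else if k = j then - x else 0)"
  have sub: "\<forall>k\<in>I. subspace (W k)" and fin: "finite I" using ds by (auto simp: internal_direct_sum_def)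
  have f: "\<forall>k\<in>I. f k \<in> W k"
  proof
    fix k assume k: "k \<in> I"
    show "f k \<in> W k"
    proof (cases "k = i")
      case True then show ?thesis using xi by (simp add: f_def)
    next
      case False
      show ?thesis
      proof (cases "k = j")
        case True then show ?thesis using False xj sub j subspace_neg by (simp add: f_def)
      next
        case False2: False
        then show ?thesis using False sub k subspace_0 by (simp add: f_def)
      qed
    qed
  qed
  have "(\<Sum>k\<in>I. f k) = (\<Sum>k\<in>I. (if k = i then x else 0) + (if k = j then - x else 0))"
    using ij by (intro sum.cong) (auto simp: f_def)
  also have "\<dots> = 0" using i j fin by (simp add: sum.distrib)
  finally have "\<forall>k\<in>I. f k = 0" using f ds unfolding internal_direct_sum_def
    by (elim conjE allE[of _ f]) auto
  then have "f i = 0" using i by blast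
  then show ?thesis by (simp add: f_def)
qed

lemma ide_prod_zero:
  assumes ds: "internal_direct_sum scale M I W" and id: "\<forall>k\<in>I. ide (W k)"
    and "i \<in> I" "j \<in> I" "i \<noteq> j" "x \<in> W i" "y \<in> W j"
  shows "mul x y = 0"
proof -
  have "x \<in> A0" "y \<in> A0" using id assms ideD(2) by blast+
  then have "mul x y \<in> W i" "mul x y \<in> W j" using id assms ideD(3,4) by blast+
  then show ?thesis using ds_disj[OF ds] assms by blast
qed

lemma Ann_ide: "ide (Ann mul A0)"
proof -
  let ?N = "Ann mul A0"
  have "0 \<in> ?N" using subA0 by (simp add: Ann_def subspace_0)
  moreover have "x + y \<in> ?N" if "x \<in> ?N" "y \<in> ?N" for x y
    using that subA0 by (auto simp: Ann_def mul_add1 mul_add2 subspace_add)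
  moreover have "scale c x \<in> ?N" if "x \<in> ?N" for c x
    using that subA0 by (auto simp: Ann_def mul_scale1 mul_scale2 subspace_scale)
  ultimately have "subspace ?N" unfolding subspace_def by blast
  moreover have "\<forall>a\<in>A0. \<forall>w\<in>?N. mul a w \<in> ?N \<and> mul w a \<in> ?N"
    using \<open>0 \<in> ?N\<close> by (auto simp: Ann_def)
  ultimately show ?thesis unfolding sub_bimodule_def by (auto simp: Ann_def)
qed

lemma sub_bimodule_ide: "sub_bimodule scale mul A0 W V \<Longrightarrow> W \<subseteq> A0 \<Longrightarrow> ide V"
  unfolding sub_bimodule_def by blast

lemma ide_inter: "ide V \<Longrightarrow> ide W \<Longrightarrow> ide (V \<inter> W)"
  unfolding sub_bimodule_def by (auto intro: subspace_inter)

lemma decomp: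
  "ide C \<Longrightarrow> \<exists>(m::nat) I. (\<forall>k<m. irreducible_sub_bimodule scale mul A0 A0 (I k)) \<and>
     internal_direct_sum scale C {..<m} I"
proof (induction "dim C" arbitrary: C rule: less_induct)
  case less
  show ?case
  proof (cases "C = {0}")
    case True
    have "internal_direct_sum scale C {..<0::nat} (\<lambda>_. {})" using True ds_empty[of "\<lambda>_. {}"] by simp
    then show ?thesis by (intro exI[of _ 0] exI[of _ "\<lambda>_. {}"]) simp
  next
    case False
    let ?Q = "\<lambda>W. ide W \<and> W \<subseteq> C \<and> W \<noteq> {0}"
    have "?Q C" using less.prems False by blast
    then obtain W where W: "?Q W" and Wmin: "\<And>V. ?Q V \<Longrightarrow> dim W \<le> dim V"
      using ex_has_least_nat[of ?Q C dim] by blast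
    have irr: "irreducible_sub_bimodule scale mul A0 A0 W"
      unfolding irreducible_sub_bimodule_def
    proof (intro conjI allI impI)
      show "ide W" "W \<noteq> {0}" using W by auto
      fix V assume V: "sub_bimodule scale mul A0 W V"
      show "V = {0} \<or> V = W"
      proof (cases "V = {0}")
        case True then show ?thesis by simp
      next
        case False
        then have "V \<noteq> {0}" .
        moreover have "ide V" using sub_bimodule_ide[OF V] W ideD(2) by blast
        moreover have "V \<subseteq> W" using V unfolding sub_bimodule_def by blast
        ultimately have "dim W \<le> dim V" using W by (intro Wmin) auto
        then show ?thesis using subspace_dim_equal[of V W] \<open>V \<subseteq> W\<close> \<open>ide V\<close> W ideD(1) by blast
      qed
    qed
    obtain W' where W': "ide W'" "W \<inter> W' = {0}" "set_sum W W' = A0"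
      using ss W unfolding semisimple_bimodule_def by blast
    let ?C' = "W' \<inter> C"
    have C'id: "ide ?C'" using ide_inter W'(1) less.prems by blast
    obtain w where w: "w \<in> W" "w \<noteq> 0" using W ideD(1)[of W] subspace_0 by blast
    have "w \<in> C" "w \<notin> ?C'" using w W W'(2) by auto
    then have ps: "?C' \<subset> C" by blast
    have sp1: "span ?C' = ?C'" using C'id ideD(1) span_eq_iff by blast
    have sp2: "span C = C" using less.prems ideD(1) span_eq_iff by blast
    have "dim ?C' < dim C" using dim_psubset[of ?C' C] ps unfolding sp1 sp2 by blast
    then obtain m :: nat and I where I: "\<forall>k<m. irreducible_sub_bimodule scale mul A0 A0 (I k)"
        "internal_direct_sum scale ?C' {..<m} I"
      using less.hyps[OF _ C'id] by blast
    let ?J = "I(m := W)"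
    have d1: "internal_direct_sum scale ?C' {..<m} ?J" using ds_cong[OF I(2)] by simp
    have d2: "internal_direct_sum scale W {m} ?J"
      using ds_single[of ?J m] W ideD(1) by simp
    have int: "?C' \<inter> W = {0}" using W'(2) W ideD(1) subspace_0 by blast
    have CW: "C = set_sum ?C' W"
    proof
      show "C \<subseteq> set_sum ?C' W"
      proof
        fix c assume c: "c \<in> C"
        then have "c \<in> A0" using less.prems ideD(2) by blast
        then obtain a b where ab: "a \<in> W" "b \<in> W'" "c = a + b"
          using W'(3) unfolding set_sum_def by blast
        have "b = c - a" using ab by simp
        moreover have "a \<in> C" using ab W by blast
        ultimately have "b \<in> C" using c less.prems ideD(1) subspace_diff by metis
        moreover have "c = b + a" using ab by (simp add: add.commute)
        ultimately show "c \<in> set_sum ?C' W" using ab unfolding set_sum_def by blast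
      qed
    next
      show "set_sum ?C' W \<subseteq> C" using W less.prems ideD(1)
        unfolding set_sum_def by (auto intro: subspace_add)
    qed
    have "internal_direct_sum scale C ({..<m} \<union> {m}) ?J"
      by (rule ds_union[OF d1 d2 _ int CW]) auto
    moreover have "{..<m} \<union> {m} = {..<Suc m}" by auto
    moreover have "\<forall>k<Suc m. irreducible_sub_bimodule scale mul A0 A0 (?J k)"
      using I(1) irr by auto
    ultimately show ?thesis by (intro exI[of _ "Suc m"] exI[of _ ?J]) auto
  qed
qed

end


context osa begin

definition dual :: "'i set \<Rightarrow> ('i \<Rightarrow> 'a set) \<Rightarrow> 'i \<Rightarrow> 'a set" where
  "dual I W k = {y \<in> A1. \<forall>l\<in>I. l \<noteq> k \<longrightarrow> (\<forall>x\<in>W l. B x y = 0)}"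

lemma dual_subspace: "subspace (dual I W k)"
proof -
  have "0 \<in> dual I W k" using subA1 subspace_0 by (auto simp: dual_def)
  moreover have "x + y \<in> dual I W k" if "x \<in> dual I W k" "y \<in> dual I W k" for x y
    using that subA1 subspace_add by (auto simp: dual_def B_add2)
  moreover have "scale c x \<in> dual I W k" if "x \<in> dual I W k" for c x
    using that subA1 subspace_scale by (auto simp: dual_def B_scale2)
  ultimately show ?thesis unfolding subspace_def by blast
qed

lemma dual_ds:
  assumes ds: "internal_direct_sum scale A0 I W"
  shows "internal_direct_sum scale A1 I (dual I W)"
proof -
  have fin: "finite I" using ds by (simp add: internal_direct_sum_def)
  have sub: "\<forall>k\<in>I. subspace (dual I W k)" using dual_subspace[of I W] by blast
  have pfacts: "\<And>x. x \<in> A0 \<Longrightarrow> (\<forall>i\<in>I. dproj I W i x \<in> W i) \<and> x = (\<Sum>i\<in>I. dproj I W i x)"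
    using proj_spec[OF ds] by blast
  have WA0: "\<And>i. i \<in> I \<Longrightarrow> W i \<subseteq> A0" using ds_in[OF ds] by blast
  have span: "A1 = {\<Sum>i\<in>I. f i |f. \<forall>i\<in>I. f i \<in> dual I W i}"
  proof
    show "{\<Sum>i\<in>I. f i |f. \<forall>i\<in>I. f i \<in> dual I W i} \<subseteq> A1"
      using subA1 by (auto intro!: subspace_sum simp: dual_def)
  next
    show "A1 \<subseteq> {\<Sum>i\<in>I. f i |f. \<forall>i\<in>I. f i \<in> dual I W i}"
    proof
      fix y assume y: "y \<in> A1"
      have ex: "\<exists>yk\<in>A1. \<forall>x\<in>A0. B x yk = B (dproj I W k x) y" if k: "k \<in> I" for k
      proof (rule pairing_surj[OF BL1 BL2 subA0 subA1])
        show "\<And>y. y \<in> A1 \<Longrightarrow> \<forall>x\<in>A0. B x y = 0 \<Longrightarrow> y = 0" using ndA1 by blast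
        show "\<And>x. x \<in> A0 \<Longrightarrow> \<forall>y\<in>A1. B x y = 0 \<Longrightarrow> x = 0" using ndA0 by blast
        show "B (dproj I W k (x + x')) y = B (dproj I W k x) y + B (dproj I W k x') y"
          if "x \<in> A0" "x' \<in> A0" for x x'
          using proj_add[OF ds that k] by (simp add: B_add1)
        show "B (dproj I W k (scale c x)) y = c * B (dproj I W k x) y"
          if "x \<in> A0" for c x
          using proj_scale[OF ds that k] by (simp add: B_scale1)
      qed
      then obtain g where g: "\<And>k. k \<in> I \<Longrightarrow> g k \<in> A1 \<and> (\<forall>x\<in>A0. B x (g k) = B (dproj I W k x) y)"
        by metis
      have gd: "\<forall>k\<in>I. g k \<in> dual I W k"
      proof
        fix k assume k: "k \<in> I"
        have "B x (g k) = 0" if "l \<in> I" "l \<noteq> k" "x \<in> W l" for l x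
        proof -
          have "x \<in> A0" using WA0 that by blast
          then have "B x (g k) = B (dproj I W k x) y" using g k by blast
          also have "dproj I W k x = 0" using proj_W[OF ds k that(1) that(3)] that(2) by simp
          finally show ?thesis by simp
        qed
        then show "g k \<in> dual I W k" using g k by (auto simp: dual_def)
      qed
      have "(\<Sum>k\<in>I. g k) - y = 0"
      proof (rule ndA1)
        show "(\<Sum>k\<in>I. g k) - y \<in> A1" using g y subA1 by (auto intro!: subspace_diff subspace_sum)
        fix x assume x: "x \<in> A0"
        have "B x ((\<Sum>k\<in>I. g k) - y) = (\<Sum>k\<in>I. B x (g k)) - B x y" by (simp add: B_diff2 B_sum2)
        also have "(\<Sum>k\<in>I. B x (g k)) = (\<Sum>k\<in>I. B (dproj I W k x) y)" using g x by (intro sum.cong) auto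
        also have "\<dots> = B (\<Sum>k\<in>I. dproj I W k x) y" by (simp add: B_sum1)
        also have "(\<Sum>k\<in>I. dproj I W k x) = x" using pfacts[OF x] by simp
        finally show "B x ((\<Sum>k\<in>I. g k) - y) = 0" by simp
      qed
      then have "y = (\<Sum>k\<in>I. g k)" by simp
      then show "y \<in> {\<Sum>i\<in>I. f i |f. \<forall>i\<in>I. f i \<in> dual I W i}" using gd by blast
    qed
  qed
  have indep: "\<forall>i\<in>I. f i = 0" if f: "\<forall>i\<in>I. f i \<in> dual I W i" "(\<Sum>i\<in>I. f i) = 0" for f
  proof
    fix i assume i: "i \<in> I"
    show "f i = 0"
    proof (rule ndA1)
      show "f i \<in> A1" using f i by (auto simp: dual_def)
      fix x assume x: "x \<in> A0"
      have px: "\<forall>l\<in>I. dproj I W l x \<in> W l" "x = (\<Sum>l\<in>I. dproj I W l x)" using pfacts[OF x] by auto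
      have "B x (f i) = (\<Sum>l\<in>I. B (dproj I W l x) (f i))"
        by (subst px(2)) (simp add: B_sum1)
      also have "\<dots> = (\<Sum>l\<in>I. if l = i then B (dproj I W i x) (f i) else 0)"
        using f(1) i px(1) by (intro sum.cong) (auto simp: dual_def)
      also have "\<dots> = B (dproj I W i x) (f i)" using i fin by simp
      finally have e1: "B x (f i) = B (dproj I W i x) (f i)" .
      have "0 = B (dproj I W i x) (\<Sum>k\<in>I. f k)" using f(2) by simp
      also have "\<dots> = (\<Sum>k\<in>I. B (dproj I W i x) (f k))" by (simp add: B_sum2)
      also have "\<dots> = (\<Sum>k\<in>I. if k = i then B (dproj I W i x) (f i) else 0)"
        using f(1) i px(1) by (intro sum.cong) (auto simp: dual_def)
      also have "\<dots> = B (dproj I W i x) (f i)" using i fin by simp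
      finally show "B x (f i) = 0" using e1 by simp
    qed
  qed
  show ?thesis unfolding internal_direct_sum_def using fin sub span indep by blast
qed

end


context osa begin

lemma span_sub:
  assumes lin: "Vector_Spaces.linear scale scale f" and U: "subspace U"
    and gen: "\<And>g. g \<in> G \<Longrightarrow> f g \<in> U" and v: "v \<in> span G"
  shows "f v \<in> U"
proof -
  have "subspace (f -` U)" using vector_space_pair.linear_subspace_vimage[OF vsp_self lin U] .
  moreover have "G \<subseteq> f -` U" using gen by blast
  ultimately have "span G \<subseteq> f -` U" by (rule span_minimal[rotated])
  then show ?thesis using v by blast
qed

lemma span_subB:
  assumes gen: "\<And>g. g \<in> G \<Longrightarrow> B g z = 0" and v: "v \<in> span G"
  shows "B v z = 0"
  using vector_space_pair.linear_eq_0_on_span[OF vsp_field BL2[of z]] gen v by blast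

lemma span_zero_set: "(\<And>g. g \<in> G \<Longrightarrow> g = 0) \<Longrightarrow> span G = {0}"
proof -
  assume "\<And>g. g \<in> G \<Longrightarrow> g = 0"
  then have "G \<subseteq> {0}" by blast
  then have "span G \<subseteq> {0}" using span_minimal subspace_single_0 by blast
  then show ?thesis using span_zero by blast
qed

lemma set_prod_zero: "(\<And>x y. x \<in> X \<Longrightarrow> y \<in> Y \<Longrightarrow> mul x y = 0) \<Longrightarrow> set_prod scale mul X Y = {0}"
  unfolding set_prod_def by (rule span_zero_set) blast

lemma set_prod_zeroD: "set_prod scale mul X Y = {0} \<Longrightarrow> x \<in> X \<Longrightarrow> y \<in> Y \<Longrightarrow> mul x y = 0"
proof -
  assume h: "set_prod scale mul X Y = {0}" "x \<in> X" "y \<in> Y"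
  have "mul x y \<in> {mul x y |x y. x \<in> X \<and> y \<in> Y}" using h(2,3) by blast
  then have "mul x y \<in> span {mul x y |x y. x \<in> X \<and> y \<in> Y}" by (rule span_base)
  then show ?thesis using h(1) unfolding set_prod_def by simp
qed

lemma N_kill: assumes a: "a \<in> Ann mul A0" and y: "y \<in> A1"
  shows "mul a y = 0" "mul y a = 0"
proof -
  have aA: "a \<in> A0" and ax: "\<And>x. x \<in> A0 \<Longrightarrow> mul x a = 0 \<and> mul a x = 0" using a by (auto simp: Ann_def)
  show "mul a y = 0"
  proof (rule ndA1)
    show "mul a y \<in> A1" using m01 aA y by blast
    fix x assume x: "x \<in> A0"
    have "B x (mul a y) = B (mul x a) y" by (simp add: Bassoc)
    then show "B x (mul a y) = 0" using ax x by simp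
  qed
  show "mul y a = 0"
  proof (rule ndA1)
    show "mul y a \<in> A1" using m10 aA y by blast
    fix x assume x: "x \<in> A0"
    have "B x (mul y a) = B (mul y a) x" using Bsym x m10 aA y by blast
    also have "\<dots> = B y (mul a x)" by (simp add: Bassoc)
    finally show "B x (mul y a) = 0" using ax x by simp
  qed
qed

end

locale osa2 = osa scale Bas mul A0 A1 B
  for scale :: "'k::field \<Rightarrow> 'a::ab_group_add \<Rightarrow> 'a" and Bas mul A0 A1 B +
  fixes n :: nat and S :: "nat \<Rightarrow> 'a set"
  assumes ds0: "internal_direct_sum scale A0 {..n} (\<lambda>k. if k < n then S k else Ann mul A0)"
    and irrS: "\<And>k. k < n \<Longrightarrow> irreducible_sub_bimodule scale mul A0 A0 (S k)"
    and nS: "\<And>k. k < n \<Longrightarrow> S k \<inter> Ann mul A0 = {0}"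
begin

definition W where "W k = (if k < n then S k else Ann mul A0)"
definition W' where "W' = dual {..n} W"

lemma dsW: "internal_direct_sum scale A0 {..n} W"
proof -
  have "W = (\<lambda>k. if k < n then S k else Ann mul A0)" by (rule ext) (simp add: W_def)
  then show ?thesis using ds0 by simp
qed

lemma dsW': "internal_direct_sum scale A1 {..n} W'"
  unfolding W'_def by (rule dual_ds[OF dsW])

lemma W_ide: "k \<le> n \<Longrightarrow> ide (W k)"
  using irrS Ann_ide by (auto simp: W_def irreducible_sub_bimodule_def)

lemma Wn: "W n = Ann mul A0" by (simp add: W_def)
lemma Wk: "k < n \<Longrightarrow> W k = S k" by (simp add: W_def)

lemma W0: "k \<le> n \<Longrightarrow> l \<le> n \<Longrightarrow> k \<noteq> l \<Longrightarrow> x \<in> W k \<Longrightarrow> y \<in> W l \<Longrightarrow> mul x y = 0"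
  using ide_prod_zero[OF dsW, of k l x y] W_ide by auto

lemma A0_zero:
  fixes f :: "'a \<Rightarrow> 'c::ab_group_add"
  assumes add: "\<And>x y. f (x + y) = f x + f y" and z: "\<And>k w. k \<le> n \<Longrightarrow> w \<in> W k \<Longrightarrow> f w = 0"
    and a: "a \<in> A0"
  shows "f a = 0"
proof -
  obtain g where g: "\<forall>k\<in>{..n}. g k \<in> W k" "a = (\<Sum>k\<in>{..n}. g k)" using ds_decomp[OF dsW a] by blast
  have "f a = (\<Sum>k\<in>{..n}. f (g k))" using g(2) additive_sum[of f g, OF add] by simp
  also have "\<dots> = 0" using g(1) z by (intro sum.neutral) auto
  finally show ?thesis .
qed

lemma W'A1: "W' k \<subseteq> A1" by (auto simp: W'_def dual_def)

lemma W'orth: "y \<in> W' k \<Longrightarrow> l \<le> n \<Longrightarrow> l \<noteq> k \<Longrightarrow> x \<in> W l \<Longrightarrow> B x y = 0"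
  by (auto simp: W'_def dual_def)

lemma W'sub: "subspace (W' k)" unfolding W'_def by (rule dual_subspace)

lemma W'_bimod: "k \<le> n \<Longrightarrow> sub_bimodule scale mul A0 A1 (W' k)"
  unfolding sub_bimodule_def
proof (intro conjI ballI)
  assume k: "k \<le> n"
  show "subspace (W' k)" by (rule W'sub)
  show "W' k \<subseteq> A1" by (rule W'A1)
  fix a y assume a: "a \<in> A0" and y: "y \<in> W' k"
  have yA: "y \<in> A1" using y W'A1 by blast
  have "B x (mul a y) = 0" if "l \<le> n" "l \<noteq> k" "x \<in> W l" for l x
  proof -
    have "B x (mul a y) = B (mul x a) y" by (simp add: Bassoc)
    moreover have "mul x a \<in> W l" using ideD(4)[OF W_ide[OF that(1)] a that(3)] .
    ultimately show ?thesis using W'orth[OF y that(1,2)] by simp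
  qed
  then show "mul a y \<in> W' k" using m01[OF a yA] by (auto simp: W'_def dual_def)
  have "B x (mul y a) = 0" if "l \<le> n" "l \<noteq> k" "x \<in> W l" for l x
  proof -
    have xA: "x \<in> A0" using ideD(2)[OF W_ide[OF that(1)]] that(3) by blast
    have "B x (mul y a) = B (mul y a) x" using Bsym[OF xA m10[OF yA a]] .
    also have "\<dots> = B y (mul a x)" by (simp add: Bassoc)
    also have "\<dots> = B (mul a x) y" using Bsym[OF m00[OF a xA] yA] by simp
    also have "mul a x \<in> W l" using ideD(3)[OF W_ide[OF that(1)] a that(3)] .
    then have "B (mul a x) y = 0" using W'orth[OF y that(1,2)] by simp
    finally show ?thesis .
  qed
  then show "mul y a \<in> W' k" using m10[OF yA a] by (auto simp: W'_def dual_def)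
qed

lemma cross0:
  assumes l: "l \<le> n" and kl: "k \<noteq> l" and a: "a \<in> W l" and y: "y \<in> W' k"
  shows "mul a y = 0" "mul y a = 0"
proof -
  have aA: "a \<in> A0" using ideD(2)[OF W_ide[OF l]] a by blast
  have yA: "y \<in> A1" using y W'A1 by blast
  show "mul a y = 0"
  proof (rule ndA1)
    show "mul a y \<in> A1" using m01 aA yA by blast
    fix x assume x: "x \<in> A0"
    have "B x (mul a y) = B (mul x a) y" by (simp add: Bassoc)
    moreover have "mul x a \<in> W l" using ideD(3)[OF W_ide[OF l] x a] .
    ultimately show "B x (mul a y) = 0" using W'orth[OF y l] kl by simp
  qed
  show "mul y a = 0"
  proof (rule ndA1)
    show "mul y a \<in> A1" using m10 aA yA by blast
    fix x assume x: "x \<in> A0"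
    have "B x (mul y a) = B (mul y a) x" using Bsym[OF x m10[OF yA aA]] .
    also have "\<dots> = B y (mul a x)" by (simp add: Bassoc)
    also have "\<dots> = B (mul a x) y" using Bsym[OF m00[OF aA x] yA] by simp
    also have "mul a x \<in> W l" using ideD(4)[OF W_ide[OF l] x a] .
    then have "B (mul a x) y = 0" using W'orth[OF y l] kl by simp
    finally show "B x (mul y a) = 0" .
  qed
qed

lemma Nhat_kill:
  assumes y: "y \<in> W' n" and a: "a \<in> A0"
  shows "mul a y = 0" "mul y a = 0"
proof -
  have yA: "y \<in> A1" using y W'A1 by blast
  have z: "mul w y = 0 \<and> mul y w = 0" if "k \<le> n" "w \<in> W k" for k w
  proof (cases "k = n")
    case True then show ?thesis using N_kill[OF _ yA, of w] that Wn by simp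
  next
    case False then show ?thesis using cross0[OF that(1) _ that(2) y] by auto
  qed
  show "mul a y = 0" using A0_zero[of "\<lambda>a. mul a y", OF mul_add1 _ a] z by blast
  show "mul y a = 0" using A0_zero[of "\<lambda>a. mul y a", OF mul_add2 _ a] z by blast
qed

end


context osa2 begin

lemma Ssub: "k < n \<Longrightarrow> S k \<subseteq> A0"
  using ideD(2)[OF W_ide[of k]] Wk by auto

lemma S_ide: "k < n \<Longrightarrow> ide (S k)"
  using W_ide[of k] Wk by auto

lemma S_simple_aux:
  assumes k: "k < n" and J: "sub_bimodule scale mul (S k) (S k) J"
  shows "J = {0} \<or> J = S k"
proof -
  have Jsub: "subspace J" and JS: "J \<subseteq> S k"
    and Jl: "\<And>a j. a \<in> S k \<Longrightarrow> j \<in> J \<Longrightarrow> mul a j \<in> J"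
    and Jr: "\<And>a j. a \<in> S k \<Longrightarrow> j \<in> J \<Longrightarrow> mul j a \<in> J"
    using J unfolding sub_bimodule_def by auto
  have "sub_bimodule scale mul A0 (S k) J"
    unfolding sub_bimodule_def
  proof (intro conjI ballI Jsub JS)
    fix a j assume a: "a \<in> A0" and j: "j \<in> J"
    obtain g where g: "\<forall>l\<in>{..n}. g l \<in> W l" "a = (\<Sum>l\<in>{..n}. g l)" using ds_decomp[OF dsW a] by blast
    have jW: "j \<in> W k" using j JS Wk k by auto
    have gk: "g k \<in> S k" using g(1) k Wk[OF k] by auto
    have "mul a j = (\<Sum>l\<in>{..n}. mul (g l) j)" using g(2) by (simp add: mul_sum1)
    also have "\<dots> \<in> J"
    proof (rule subspace_sum[OF Jsub])
      fix l assume l: "l \<in> {..n}"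
      show "mul (g l) j \<in> J"
      proof (cases "l = k")
        case True then show ?thesis using Jl[OF gk j] by simp
      next
        case False then show ?thesis using W0[of l k "g l" j] g(1) l k jW subspace_0[OF Jsub] by auto
      qed
    qed
    finally show "mul a j \<in> J" .
    have "mul j a = (\<Sum>l\<in>{..n}. mul j (g l))" using g(2) by (simp add: mul_sum2)
    also have "\<dots> \<in> J"
    proof (rule subspace_sum[OF Jsub])
      fix l assume l: "l \<in> {..n}"
      show "mul j (g l) \<in> J"
      proof (cases "l = k")
        case True then show ?thesis using Jr[OF gk j] by simp
      next
        case False then show ?thesis using W0[of k l j "g l"] g(1) l k jW subspace_0[OF Jsub] by auto
      qed
    qed
    finally show "mul j a \<in> J" .
  qed
  then show ?thesis using irrS[OF k] unfolding irreducible_sub_bimodule_def by blast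
qed

lemma S_simple: "k < n \<Longrightarrow> simple_ideal scale mul A0 (S k)"
proof -
  assume k: "k < n"
  have ne: "S k \<noteq> {0}" using irrS[OF k] by (simp add: irreducible_sub_bimodule_def)
  have "set_prod scale mul (S k) (S k) \<noteq> {0}"
  proof
    assume z: "set_prod scale mul (S k) (S k) = {0}"
    have "x \<in> Ann mul A0" if x: "x \<in> S k" for x
    proof -
      have xA: "x \<in> A0" using x Ssub k by blast
      have xW: "x \<in> W k" using x Wk k by simp
      have h: "mul x w = 0 \<and> mul w x = 0" if l: "l \<le> n" "w \<in> W l" for l w
      proof (cases "l = k")
        case True then show ?thesis using set_prod_zeroD[OF z] x l Wk k by auto
      next
        case False
        then show ?thesis using W0[of k l x w] W0[of l k w x] l k xW by auto
      qed
      have "mul x a = 0 \<and> mul a x = 0" if a: "a \<in> A0" for a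
        using A0_zero[of "\<lambda>a. mul x a", OF mul_add2 _ a] A0_zero[of "\<lambda>a. mul a x", OF mul_add1 _ a] h
        by blast
      then show ?thesis using xA by (simp add: Ann_def)
    qed
    then have "S k \<subseteq> {0}" using nS[OF k] by blast
    then show False using ne S_ide[OF k] ideD(1) subspace_0 by blast
  qed
  then show ?thesis unfolding simple_ideal_def using S_ide[OF k] S_simple_aux[OF k] by blast
qed

lemma S_span: "k < n \<Longrightarrow> set_prod scale mul (S k) (S k) = S k"
proof -
  assume k: "k < n"
  let ?J = "set_prod scale mul (S k) (S k)"
  have Sid: "ide (S k)" by (rule S_ide[OF k])
  have gen: "{mul x y |x y. x \<in> S k \<and> y \<in> S k} \<subseteq> S k"
    using Sid ideD(2,3) by blast
  have JS: "?J \<subseteq> S k" unfolding set_prod_def using span_minimal[OF gen ideD(1)[OF Sid]] .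
  have "sub_bimodule scale mul (S k) (S k) ?J"
    unfolding sub_bimodule_def
  proof (intro conjI ballI JS)
    show "subspace ?J" unfolding set_prod_def by simp
    fix a v assume a: "a \<in> S k" and v: "v \<in> ?J"
    show "mul a v \<in> ?J" unfolding set_prod_def
    proof (rule span_sub[OF linL subspace_span _ v[unfolded set_prod_def]])
      fix g assume "g \<in> {mul x y |x y. x \<in> S k \<and> y \<in> S k}"
      then obtain x y where g: "g = mul x y" "x \<in> S k" "y \<in> S k" by blast
      have "mul a g = mul (mul a x) y" using g by (simp add: assoc)
      moreover have "mul a x \<in> S k" using gen a g(2) by blast
      ultimately show "mul a g \<in> span {mul x y |x y. x \<in> S k \<and> y \<in> S k}"
        using g(3) by (intro span_base) blast
    qed
    show "mul v a \<in> ?J" unfolding set_prod_def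
    proof (rule span_sub[OF linR subspace_span _ v[unfolded set_prod_def]])
      fix g assume "g \<in> {mul x y |x y. x \<in> S k \<and> y \<in> S k}"
      then obtain x y where g: "g = mul x y" "x \<in> S k" "y \<in> S k" by blast
      have "mul g a = mul x (mul y a)" using g by (simp add: assoc)
      moreover have "mul y a \<in> S k" using gen a g(3) by blast
      ultimately show "mul g a \<in> span {mul x y |x y. x \<in> S k \<and> y \<in> S k}"
        using g(2) by (intro span_base) blast
    qed
  qed
  then have "?J = {0} \<or> ?J = S k" by (rule S_simple_aux[OF k])
  moreover have "?J \<noteq> {0}" using S_simple[OF k] by (simp add: simple_ideal_def)
  ultimately show ?thesis by blast
qed

lemma W'_nonzero: "k < n \<Longrightarrow> W' k \<noteq> {0}"
proof
  assume k: "k < n" and z: "W' k = {0}"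
  have ne: "S k \<noteq> {0}" using irrS[OF k] by (simp add: irreducible_sub_bimodule_def)
  obtain s where s: "s \<in> S k" "s \<noteq> 0" using ne S_ide[OF k] ideD(1) subspace_0 by blast
  have sA: "s \<in> A0" using s Ssub k by blast
  have "\<exists>y\<in>A1. B s y \<noteq> 0" using ndA0[OF sA] s(2) by blast
  then obtain y where y: "y \<in> A1" "B s y \<noteq> 0" by blast
  obtain g where g: "\<forall>l\<in>{..n}. g l \<in> W' l" "y = (\<Sum>l\<in>{..n}. g l)" using ds_decomp[OF dsW' y(1)] by blast
  have "B s y = (\<Sum>l\<in>{..n}. B s (g l))" using g(2) by (simp add: B_sum2)
  also have "\<dots> = 0"
  proof (rule sum.neutral, rule ballI)
    fix l assume l: "l \<in> {..n}"
    show "B s (g l) = 0"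
    proof (cases "l = k")
      case True
      have "g k \<in> W' k" using g(1) k by auto
      then show ?thesis using True z by simp
    next
      case False then show ?thesis using W'orth[of "g l" l k s] g(1) l k s Wk by auto
    qed
  qed
  finally show False using y(2) by simp
qed

end


context osa2 begin

lemma flip_surj:
  assumes add: "\<And>y y'. y \<in> A1 \<Longrightarrow> y' \<in> A1 \<Longrightarrow> \<psi> (y + y') = \<psi> y + \<psi> y'"
    and sc: "\<And>c y. y \<in> A1 \<Longrightarrow> \<psi> (scale c y) = c * \<psi> y"
  shows "\<exists>x\<in>A0. \<forall>y\<in>A1. B x y = \<psi> y"
proof -
  have "\<exists>x\<in>A0. \<forall>y\<in>A1. (\<lambda>y x. B x y) y x = \<psi> y"
  proof (rule pairing_surj[of "\<lambda>y x. B x y" A1 A0 \<psi>])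
    show "\<And>x. Vector_Spaces.linear scale (*) (\<lambda>y. B y x)" by (rule BL2)
    show "\<And>y. Vector_Spaces.linear scale (*) (\<lambda>x. B y x)" using BL1 by simp
  qed (use subA0 subA1 ndA0 ndA1 add sc in auto)
  then show ?thesis by simp
qed

lemma W'_irr: "k < n \<Longrightarrow> irreducible_sub_bimodule scale mul A0 A1 (W' k)"
proof -
  assume k: "k < n"
  have bm: "sub_bimodule scale mul A0 A1 (W' k)" using W'_bimod k by simp
  have "V = {0} \<or> V = W' k" if V: "sub_bimodule scale mul A0 (W' k) V" for V
  proof -
    have Vsub: "subspace V" and VW: "V \<subseteq> W' k"
      and Vl: "\<And>a v. a \<in> A0 \<Longrightarrow> v \<in> V \<Longrightarrow> mul a v \<in> V"
      and Vr: "\<And>a v. a \<in> A0 \<Longrightarrow> v \<in> V \<Longrightarrow> mul v a \<in> V"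
      using V unfolding sub_bimodule_def by auto
    have VA: "V \<subseteq> A1" using VW W'A1 by blast
    define J where "J = {s \<in> S k. \<forall>v\<in>V. B s v = 0}"
    have "sub_bimodule scale mul (S k) (S k) J"
      unfolding sub_bimodule_def
    proof (intro conjI ballI)
      have "0 \<in> J" using S_ide[OF k] ideD(1) subspace_0 by (auto simp: J_def)
      moreover have "x + y \<in> J" if "x \<in> J" "y \<in> J" for x y
        using that S_ide[OF k] ideD(1) subspace_add by (auto simp: J_def B_add1)
      moreover have "scale c x \<in> J" if "x \<in> J" for c x
        using that S_ide[OF k] ideD(1) subspace_scale by (auto simp: J_def B_scale1)
      ultimately show "subspace J" unfolding subspace_def by blast
      show "J \<subseteq> S k" by (auto simp: J_def)
      fix t s assume t: "t \<in> S k" and s: "s \<in> J"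
      have tA: "t \<in> A0" and sA: "s \<in> A0" using t s Ssub k by (auto simp: J_def)
      have sS: "s \<in> S k" using s by (simp add: J_def)
      have "B (mul t s) v = 0" if v: "v \<in> V" for v
      proof -
        have vA: "v \<in> A1" using v VA by blast
        have "B (mul t s) v = B v (mul t s)" using Bsym[OF m00[OF tA sA] vA] .
        also have "\<dots> = B (mul v t) s" by (simp add: Bassoc)
        also have "\<dots> = B s (mul v t)" using Bsym[OF sA m10[OF vA tA]] by simp
        also have "\<dots> = 0" using s Vr[OF tA v] by (simp add: J_def)
        finally show ?thesis .
      qed
      then show "mul t s \<in> J" using ideD(3)[OF S_ide[OF k] tA sS] by (simp add: J_def)
      have "B (mul s t) v = 0" if v: "v \<in> V" for v
      proof -
        have "B (mul s t) v = B s (mul t v)" by (simp add: Bassoc)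
        also have "\<dots> = 0" using s Vl[OF tA v] by (simp add: J_def)
        finally show ?thesis .
      qed
      then show "mul s t \<in> J" using ideD(4)[OF S_ide[OF k] tA sS] by (simp add: J_def)
    qed
    then have "J = {0} \<or> J = S k" by (rule S_simple_aux[OF k])
    then show ?thesis
    proof
      assume JS: "J = S k"
      have "v = 0" if v: "v \<in> V" for v
      proof (rule ndA1)
        show "v \<in> A1" using v VA by blast
        fix x assume x: "x \<in> A0"
        show "B x v = 0"
        proof (rule A0_zero[of "\<lambda>x. B x v", OF B_add1 _ x])
          fix l w assume l: "l \<le> n" and w: "w \<in> W l"
          show "B w v = 0"
          proof (cases "l = k")
            case True
            then have "w \<in> J" using JS w Wk k by simp
            then show ?thesis using v by (simp add: J_def)
          next
            case False then show ?thesis using W'orth[of v k l w] v VW l w by blast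
          qed
        qed
      qed
      then have "V \<subseteq> {0}" by blast
      then show ?thesis using Vsub subspace_0 by blast
    next
      assume J0: "J = {0}"
      have "W' k \<subseteq> V"
      proof
        fix z assume z: "z \<in> W' k"
        show "z \<in> V"
        proof (rule ccontr)
          assume zV: "z \<notin> V"
          obtain \<psi> where psi: "Vector_Spaces.linear scale (*) \<psi>" "\<forall>v\<in>V. \<psi> v = 0" "\<psi> z = 1"
            using sep_functional[OF Vsub zV] by blast
          obtain x where x: "x \<in> A0" "\<forall>y\<in>A1. B x y = \<psi> y"
            using flip_surj[of \<psi>] vector_space_pair.linear_add[OF vsp_field psi(1)]
              vector_space_pair.linear_scale[OF vsp_field psi(1)] by blast
          obtain g where g: "\<forall>l\<in>{..n}. g l \<in> W l" "x = (\<Sum>l\<in>{..n}. g l)" using ds_decomp[OF dsW x(1)] by blast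
          have Bg: "B x w = B (g k) w" if w: "w \<in> W' k" for w
          proof -
            have "B x w = (\<Sum>l\<in>{..n}. B (g l) w)" using g(2) by (simp add: B_sum1)
            also have "\<dots> = (\<Sum>l\<in>{..n}. if l = k then B (g k) w else 0)"
            proof (rule sum.cong)
              fix l assume l: "l \<in> {..n}"
              show "B (g l) w = (if l = k then B (g k) w else 0)"
                using W'orth[of w k l "g l"] w l g(1) by auto
            qed simp
            also have "\<dots> = B (g k) w" using k by simp
            finally show ?thesis .
          qed
          have gkS: "g k \<in> S k" using g(1) k Wk[OF k] by auto
          have "g k \<in> J" unfolding J_def
          proof (intro CollectI conjI ballI gkS)
            fix v assume v: "v \<in> V"
            have "B (g k) v = B x v" using Bg v VW by auto
            also have "\<dots> = \<psi> v" using x(2) v VA by auto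
            finally show "B (g k) v = 0" using psi(2) v by simp
          qed
          then have "g k = 0" using J0 by simp
          then have "B x z = 0" using Bg[OF z] by simp
          moreover have "B x z = 1" using x(2) psi(3) z W'A1[of k] by auto
          ultimately show False by simp
        qed
      qed
      then show ?thesis using VW by blast
    qed
  qed
  then show ?thesis unfolding irreducible_sub_bimodule_def using bm W'_nonzero[OF k] by blast
qed

end


context osa2 begin

lemma W'_zero_test:
  assumes k: "k < n" and z: "z \<in> W' k"
    and h: "\<And>s s'. s \<in> S k \<Longrightarrow> s' \<in> S k \<Longrightarrow> B (mul s s') z = 0"
  shows "z = 0"
proof (rule ndA1)
  show "z \<in> A1" using z W'A1 by blast
  fix x assume x: "x \<in> A0"
  show "B x z = 0"
  proof (rule A0_zero[of "\<lambda>x. B x z", OF B_add1 _ x])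
    fix l w assume l: "l \<le> n" and w: "w \<in> W l"
    show "B w z = 0"
    proof (cases "l = k")
      case True
      then have "w \<in> set_prod scale mul (S k) (S k)" using S_span[OF k] w Wk[OF k] by simp
      then have wsp: "w \<in> span {mul x y |x y. x \<in> S k \<and> y \<in> S k}" unfolding set_prod_def .
      show ?thesis
      proof (rule span_subB[OF _ wsp])
        fix g assume "g \<in> {mul x y |x y. x \<in> S k \<and> y \<in> S k}"
        then obtain s s' where "g = mul s s'" "s \<in> S k" "s' \<in> S k" by blast
        then show "B g z = 0" using h by simp
      qed
    next
      case False then show ?thesis using W'orth[OF z l] w by blast
    qed
  qed
qed

lemma Sh_span1: "k < n \<Longrightarrow> set_prod scale mul (S k) (W' k) = W' k"
proof -
  assume k: "k < n"
  let ?G = "{mul x y |x y. x \<in> S k \<and> y \<in> W' k}"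
  let ?V = "set_prod scale mul (S k) (W' k)"
  have bm: "sub_bimodule scale mul A0 A1 (W' k)" using W'_bimod k by simp
  have Sk: "ide (S k)" by (rule S_ide[OF k])
  have gen: "?G \<subseteq> W' k" using bm Ssub[OF k] unfolding sub_bimodule_def by blast
  have VW: "?V \<subseteq> W' k" unfolding set_prod_def using span_minimal[OF gen W'sub] .
  have "sub_bimodule scale mul A0 (W' k) ?V"
    unfolding sub_bimodule_def
  proof (intro conjI ballI VW)
    show "subspace ?V" unfolding set_prod_def by simp
    fix a v assume a: "a \<in> A0" and v: "v \<in> ?V"
    show "mul a v \<in> ?V" unfolding set_prod_def
    proof (rule span_sub[OF linL subspace_span _ v[unfolded set_prod_def]])
      fix g assume "g \<in> ?G"
      then obtain x y where g: "g = mul x y" "x \<in> S k" "y \<in> W' k" by blast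
      have "mul a g = mul (mul a x) y" using g by (simp add: assoc)
      moreover have "mul a x \<in> S k" using ideD(3)[OF Sk a g(2)] .
      ultimately show "mul a g \<in> span ?G" using g(3) by (intro span_base) blast
    qed
    show "mul v a \<in> ?V" unfolding set_prod_def
    proof (rule span_sub[OF linR subspace_span _ v[unfolded set_prod_def]])
      fix g assume "g \<in> ?G"
      then obtain x y where g: "g = mul x y" "x \<in> S k" "y \<in> W' k" by blast
      have "mul g a = mul x (mul y a)" using g by (simp add: assoc)
      moreover have "mul y a \<in> W' k" using bm a g(3) unfolding sub_bimodule_def by blast
      ultimately show "mul g a \<in> span ?G" using g(2) by (intro span_base) blast
    qed
  qed
  then have "?V = {0} \<or> ?V = W' k" using W'_irr[OF k] unfolding irreducible_sub_bimodule_def by blast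
  moreover have "?V \<noteq> {0}"
  proof
    assume V0: "?V = {0}"
    have "z = 0" if z: "z \<in> W' k" for z
    proof (rule W'_zero_test[OF k z])
      fix s s' assume s: "s \<in> S k" and s': "s' \<in> S k"
      have "B (mul s s') z = B s (mul s' z)" by (simp add: Bassoc)
      also have "mul s' z = 0" using set_prod_zeroD[OF V0 s' z] .
      finally show "B (mul s s') z = 0" by simp
    qed
    then have "W' k \<subseteq> {0}" by blast
    then show False using W'_nonzero[OF k] W'sub subspace_0 by blast
  qed
  ultimately show ?thesis by blast
qed

lemma Sh_span2: "k < n \<Longrightarrow> set_prod scale mul (W' k) (S k) = W' k"
proof -
  assume k: "k < n"
  let ?G = "{mul x y |x y. x \<in> W' k \<and> y \<in> S k}"
  let ?V = "set_prod scale mul (W' k) (S k)"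
  have bm: "sub_bimodule scale mul A0 A1 (W' k)" using W'_bimod k by simp
  have Sk: "ide (S k)" by (rule S_ide[OF k])
  have gen: "?G \<subseteq> W' k" using bm Ssub[OF k] unfolding sub_bimodule_def by blast
  have VW: "?V \<subseteq> W' k" unfolding set_prod_def using span_minimal[OF gen W'sub] .
  have "sub_bimodule scale mul A0 (W' k) ?V"
    unfolding sub_bimodule_def
  proof (intro conjI ballI VW)
    show "subspace ?V" unfolding set_prod_def by simp
    fix a v assume a: "a \<in> A0" and v: "v \<in> ?V"
    show "mul a v \<in> ?V" unfolding set_prod_def
    proof (rule span_sub[OF linL subspace_span _ v[unfolded set_prod_def]])
      fix g assume "g \<in> ?G"
      then obtain x y where g: "g = mul x y" "x \<in> W' k" "y \<in> S k" by blast
      have "mul a g = mul (mul a x) y" using g by (simp add: assoc)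
      moreover have "mul a x \<in> W' k" using bm a g(2) unfolding sub_bimodule_def by blast
      ultimately show "mul a g \<in> span ?G" using g(3) by (intro span_base) blast
    qed
    show "mul v a \<in> ?V" unfolding set_prod_def
    proof (rule span_sub[OF linR subspace_span _ v[unfolded set_prod_def]])
      fix g assume "g \<in> ?G"
      then obtain x y where g: "g = mul x y" "x \<in> W' k" "y \<in> S k" by blast
      have "mul g a = mul x (mul y a)" using g by (simp add: assoc)
      moreover have "mul y a \<in> S k" using ideD(4)[OF Sk a g(3)] .
      ultimately show "mul g a \<in> span ?G" using g(2) by (intro span_base) blast
    qed
  qed
  then have "?V = {0} \<or> ?V = W' k" using W'_irr[OF k] unfolding irreducible_sub_bimodule_def by blast
  moreover have "?V \<noteq> {0}"
  proof
    assume V0: "?V = {0}"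
    have "z = 0" if z: "z \<in> W' k" for z
    proof (rule W'_zero_test[OF k z])
      fix s s' assume s: "s \<in> S k" and s': "s' \<in> S k"
      have zA: "z \<in> A1" using z W'A1 by blast
      have sA: "mul s s' \<in> A0" using s s' Ssub[OF k] m00 by blast
      have "B (mul s s') z = B z (mul s s')" using Bsym[OF sA zA] .
      also have "\<dots> = B (mul z s) s'" by (simp add: Bassoc)
      also have "mul z s = 0" using set_prod_zeroD[OF V0 z s] .
      finally show "B (mul s s') z = 0" by simp
    qed
    then have "W' k \<subseteq> {0}" by blast
    then show False using W'_nonzero[OF k] W'sub subspace_0 by blast
  qed
  ultimately show ?thesis by blast
qed

lemma in_span1: "k < n \<Longrightarrow> z \<in> W' k \<Longrightarrow> z \<in> span {mul x y |x y. x \<in> S k \<and> y \<in> W' k}"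
  using Sh_span1 unfolding set_prod_def by blast
lemma in_span2: "k < n \<Longrightarrow> z \<in> W' k \<Longrightarrow> z \<in> span {mul x y |x y. x \<in> W' k \<and> y \<in> S k}"
  using Sh_span2 unfolding set_prod_def by blast

lemma prod_i: "i < n \<Longrightarrow> j < n \<Longrightarrow> i \<noteq> j \<Longrightarrow> set_prod scale mul (W' i) (W' j) = {0}"
proof (rule set_prod_zero)
  fix y z assume i: "i < n" and j: "j < n" and ij: "i \<noteq> j" and y: "y \<in> W' i" and z: "z \<in> W' j"
  have "mul y z \<in> {0}"
  proof (rule span_sub[OF linL subspace_single_0 _ in_span1[OF j z]])
    fix g assume "g \<in> {mul x y |x y. x \<in> S j \<and> y \<in> W' j}"
    then obtain s z' where g: "g = mul s z'" "s \<in> S j" "z' \<in> W' j" by blast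
    have "mul y s = 0" using cross0(2)[of j i s y] j ij g(2) Wk[OF j] y by auto
    then show "mul y g \<in> {0}" using g by (simp add: assoc[symmetric])
  qed
  then show "mul y z = 0" by simp
qed

lemma prod_ii: "k < n \<Longrightarrow> set_prod scale mul (W' k) (W' k) \<in> {{0}, S k}"
proof -
  assume k: "k < n"
  let ?G = "{mul x y |x y. x \<in> W' k \<and> y \<in> W' k}"
  let ?P = "set_prod scale mul (W' k) (W' k)"
  have bm: "sub_bimodule scale mul A0 A1 (W' k)" using W'_bimod k by simp
  have Sk: "ide (S k)" by (rule S_ide[OF k])
  have gen: "?G \<subseteq> S k"
  proof
    fix g assume "g \<in> ?G"
    then obtain y z where g: "g = mul y z" "y \<in> W' k" "z \<in> W' k" by blast
    have zA: "z \<in> A1" using g(3) W'A1 by blast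
    show "g \<in> S k" unfolding g(1)
    proof (rule span_sub[OF linR ideD(1)[OF Sk] _ in_span1[OF k g(2)]])
      fix h assume "h \<in> {mul x y |x y. x \<in> S k \<and> y \<in> W' k}"
      then obtain s y' where h: "h = mul s y'" "s \<in> S k" "y' \<in> W' k" by blast
      have "mul h z = mul s (mul y' z)" using h by (simp add: assoc)
      moreover have "mul y' z \<in> A0" using m11 h(3) zA W'A1 by blast
      ultimately show "mul h z \<in> S k" using ideD(4)[OF Sk] h(2) by simp
    qed
  qed
  have PS: "?P \<subseteq> S k" unfolding set_prod_def using span_minimal[OF gen ideD(1)[OF Sk]] .
  have "sub_bimodule scale mul (S k) (S k) ?P"
    unfolding sub_bimodule_def
  proof (intro conjI ballI PS)
    show "subspace ?P" unfolding set_prod_def by simp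
    fix a v assume a: "a \<in> S k" and v: "v \<in> ?P"
    have aA: "a \<in> A0" using a Ssub[OF k] by blast
    show "mul a v \<in> ?P" unfolding set_prod_def
    proof (rule span_sub[OF linL subspace_span _ v[unfolded set_prod_def]])
      fix g assume "g \<in> ?G"
      then obtain x y where g: "g = mul x y" "x \<in> W' k" "y \<in> W' k" by blast
      have "mul a g = mul (mul a x) y" using g by (simp add: assoc)
      moreover have "mul a x \<in> W' k" using bm aA g(2) unfolding sub_bimodule_def by blast
      ultimately show "mul a g \<in> span ?G" using g(3) by (intro span_base) blast
    qed
    show "mul v a \<in> ?P" unfolding set_prod_def
    proof (rule span_sub[OF linR subspace_span _ v[unfolded set_prod_def]])
      fix g assume "g \<in> ?G"
      then obtain x y where g: "g = mul x y" "x \<in> W' k" "y \<in> W' k" by blast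
      have "mul g a = mul x (mul y a)" using g by (simp add: assoc)
      moreover have "mul y a \<in> W' k" using bm aA g(3) unfolding sub_bimodule_def by blast
      ultimately show "mul g a \<in> span ?G" using g(2) by (intro span_base) blast
    qed
  qed
  then have "?P = {0} \<or> ?P = S k" by (rule S_simple_aux[OF k])
  then show ?thesis by blast
qed

lemma prod_iii: "k < n \<Longrightarrow> set_prod scale mul (W' n) (W' k) = {0} \<and> set_prod scale mul (W' k) (W' n) = {0}"
proof (intro conjI; rule set_prod_zero)
  fix y z assume k: "k < n" and y: "y \<in> W' n" and z: "z \<in> W' k"
  have "mul y z \<in> {0}"
  proof (rule span_sub[OF linL subspace_single_0 _ in_span1[OF k z]])
    fix g assume "g \<in> {mul x y |x y. x \<in> S k \<and> y \<in> W' k}"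
    then obtain s z' where g: "g = mul s z'" "s \<in> S k" "z' \<in> W' k" by blast
    have "mul y s = 0" using Nhat_kill(2)[OF y] g(2) Ssub[OF k] by blast
    then show "mul y g \<in> {0}" using g by (simp add: assoc[symmetric])
  qed
  then show "mul y z = 0" by simp
next
  fix z y assume k: "k < n" and z: "z \<in> W' k" and y: "y \<in> W' n"
  have "mul z y \<in> {0}"
  proof (rule span_sub[OF linR subspace_single_0 _ in_span2[OF k z]])
    fix g assume "g \<in> {mul x y |x y. x \<in> W' k \<and> y \<in> S k}"
    then obtain z' s where g: "g = mul z' s" "z' \<in> W' k" "s \<in> S k" by blast
    have "mul s y = 0" using Nhat_kill(1)[OF y] g(3) Ssub[OF k] by blast
    then show "mul g y \<in> {0}" using g by (simp add: assoc)
  qed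
  then show "mul z y = 0" by simp
qed

lemma prod_iv: "set_prod scale mul (W' n) (W' n) \<subseteq> Ann mul A0"
  unfolding set_prod_def
proof (rule span_minimal[OF _ ideD(1)[OF Ann_ide]])
  show "{mul x y |x y. x \<in> W' n \<and> y \<in> W' n} \<subseteq> Ann mul A0"
  proof
    fix g assume "g \<in> {mul x y |x y. x \<in> W' n \<and> y \<in> W' n}"
    then obtain y z where g: "g = mul y z" "y \<in> W' n" "z \<in> W' n" by blast
    have gA: "g \<in> A0" using g m11 W'A1 by blast
    have "mul g a = 0 \<and> mul a g = 0" if a: "a \<in> A0" for a
    proof
      show "mul g a = 0" using g Nhat_kill(2)[OF g(3) a] by (simp add: assoc)
      have "mul a g = mul (mul a y) z" using g by (simp add: assoc)
      then show "mul a g = 0" using Nhat_kill(1)[OF g(2) a] by simp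
    qed
    then show "g \<in> Ann mul A0" using gA by (simp add: Ann_def)
  qed
qed

lemma Nhat_A0: "set_prod scale mul A0 (W' n) = {0}" "set_prod scale mul (W' n) A0 = {0}"
  using Nhat_kill by (auto intro!: set_prod_zero)

end


lemma set_sum_sub: "set_sum X Y \<subseteq> set_sum Y X"
proof
  fix z assume "z \<in> set_sum X Y"
  then obtain x y where "z = x + y" "x \<in> X" "y \<in> Y" unfolding set_sum_def by blast
  moreover have "x + y = y + x" by (simp add: add.commute)
  ultimately show "z \<in> set_sum Y X" unfolding set_sum_def by blast
qed

lemma set_sum_commute: "set_sum X Y = set_sum Y X"
  using set_sum_sub[of X Y] set_sum_sub[of Y X] by blast

context osa begin

lemma main_osa:
  "\<exists>(n::nat) (S :: nat \<Rightarrow> 'a set) (S' :: nat \<Rightarrow> 'a set) (N' :: 'a set).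
     let N = Ann mul A0 in
     (\<forall>i<n. simple_ideal scale mul A0 (S i)) \<and>
     (\<forall>i<n. irreducible_sub_bimodule scale mul A0 A1 (S' i)) \<and>
     sub_bimodule scale mul A0 A1 N' \<and>
     set_prod scale mul A0 N' = {0} \<and> set_prod scale mul N' A0 = {0} \<and>
     internal_direct_sum scale A0 {..n} (\<lambda>i. if i < n then S i else N) \<and>
     internal_direct_sum scale A1 {..n} (\<lambda>i. if i < n then S' i else N') \<and>
     internal_direct_sum scale UNIV {..2*n+1}
       (\<lambda>k. if k < n then S k else if k = n then N
            else if k < 2*n+1 then S' (k - n - 1) else N') \<and>
     (\<forall>i<n. \<forall>j<n. i \<noteq> j \<longrightarrow>
        set_prod scale mul (S' i) (S' j) = {0} \<and> set_prod scale mul (S' j) (S' i) = {0}) \<and>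
     (\<forall>i<n. set_prod scale mul (S' i) (S' i) \<in> {{0}, S i}) \<and>
     (\<forall>i<n. set_prod scale mul N' (S' i) = {0} \<and> set_prod scale mul (S' i) N' = {0}) \<and>
     set_prod scale mul N' N' \<subseteq> N"
proof -
  let ?N = "Ann mul A0"
  obtain C where C: "ide C" "?N \<inter> C = {0}" "set_sum ?N C = A0"
    using ss Ann_ide unfolding semisimple_bimodule_def by blast
  obtain n :: nat and S where irr: "\<forall>k<n. irreducible_sub_bimodule scale mul A0 A0 (S k)"
    and ds: "internal_direct_sum scale C {..<n} S"
    using decomp[OF C(1)] by blast
  define F where "F = (\<lambda>k. if k < n then S k else ?N)"
  have d1: "internal_direct_sum scale C {..<n} F" using ds_cong[OF ds] by (simp add: F_def)
  have Nsub: "subspace ?N" using ideD(1)[OF Ann_ide] .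
  have d2: "internal_direct_sum scale (F n) {n} F" using ds_single[of F n] Nsub by (simp add: F_def)
  then have d2': "internal_direct_sum scale ?N {n} F" by (simp add: F_def)
  have CN: "C \<inter> ?N = {0}" using C(2) by blast
  have A0CN: "A0 = set_sum C ?N" using C(3) set_sum_commute by metis
  have "internal_direct_sum scale A0 ({..<n} \<union> {n}) F"
    by (rule ds_union[OF d1 d2' _ CN A0CN]) auto
  moreover have "{..<n} \<union> {n} = {..n}" by auto
  ultimately have ds0F: "internal_direct_sum scale A0 {..n} F" by simp
  then have ds0: "internal_direct_sum scale A0 {..n} (\<lambda>k. if k < n then S k else ?N)"
    by (simp add: F_def)
  have nS: "S k \<inter> ?N = {0}" if k: "k < n" for k
  proof -
    have "S k \<subseteq> C" using ds_in[OF ds] k by blast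
    moreover have "0 \<in> S k" using irr k ideD(1) subspace_0 unfolding irreducible_sub_bimodule_def by blast
    moreover have "0 \<in> ?N" using Nsub subspace_0 by blast
    ultimately show ?thesis using C(2) by blast
  qed
  interpret o2: osa2 scale Bas mul A0 A1 B n S
    by unfold_locales (use ds0 irr nS in auto)
  let ?S' = "o2.W'" and ?N' = "o2.W' n"
  let ?G = "\<lambda>k. if k < n then S k else if k = n then ?N
            else if k < 2*n+1 then ?S' (k - n - 1) else ?N'"
  have dsA1: "internal_direct_sum scale A1 {..n} (\<lambda>i. if i < n then ?S' i else ?N')"
    by (rule ds_cong[OF o2.dsW']) auto
  have g1: "internal_direct_sum scale A0 {..n} ?G" by (rule ds_cong[OF ds0]) auto
  have bij: "bij_betw (\<lambda>j. j - Suc n) {Suc n..2*n+1} {..n}"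
    by (rule bij_betw_byWitness[where f'="\<lambda>i. i + Suc n"]) auto
  have g2': "internal_direct_sum scale A1 {Suc n..2*n+1} (\<lambda>j. o2.W' (j - Suc n))"
    using ds_reindex[OF o2.dsW' bij] .
  have g2: "internal_direct_sum scale A1 {Suc n..2*n+1} ?G"
  proof (rule ds_cong[OF g2'])
    fix j assume j: "j \<in> {Suc n..2*n+1}"
    have j1: "\<not> j < n" "j \<noteq> n" "Suc n \<le> j" "j \<le> 2*n+1" using j by auto
    show "o2.W' (j - Suc n) = ?G j"
    proof (cases "j < 2*n+1")
      case True
      have "?G j = o2.W' (j - n - 1)" using True j1 by simp
      moreover have "j - n - 1 = j - Suc n" by simp
      ultimately show ?thesis by simp
    next
      case False
      then have jj: "j = 2*n+1" using j1 by linarith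
      have "?G j = o2.W' n" using False j1 by simp
      moreover have "j - Suc n = n" using jj by simp
      ultimately show ?thesis by simp
    qed
  qed
  have U: "UNIV = set_sum A0 A1" using A01sum by simp
  have "internal_direct_sum scale UNIV ({..n} \<union> {Suc n..2*n+1}) ?G"
    by (rule ds_union[OF g1 g2 _ A01 U]) auto
  moreover have "{..n} \<union> {Suc n..2*n+1} = {..2*n+1}" by auto
  ultimately have dsU: "internal_direct_sum scale UNIV {..2*n+1} ?G" by simp
  have c1: "\<forall>i<n. simple_ideal scale mul A0 (S i)" using o2.S_simple by blast
  have c2: "\<forall>i<n. irreducible_sub_bimodule scale mul A0 A1 (?S' i)" using o2.W'_irr by blast
  have c3: "sub_bimodule scale mul A0 A1 ?N'" using o2.W'_bimod[of n] by simp
  have c4: "set_prod scale mul A0 ?N' = {0}" by (rule o2.Nhat_A0(1))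
  have c5: "set_prod scale mul ?N' A0 = {0}" by (rule o2.Nhat_A0(2))
  have c9: "\<forall>i<n. \<forall>j<n. i \<noteq> j \<longrightarrow>
        set_prod scale mul (?S' i) (?S' j) = {0} \<and> set_prod scale mul (?S' j) (?S' i) = {0}"
    using o2.prod_i by auto
  have c10: "\<forall>i<n. set_prod scale mul (?S' i) (?S' i) \<in> {{0}, S i}" using o2.prod_ii by blast
  have c11: "\<forall>i<n. set_prod scale mul ?N' (?S' i) = {0} \<and> set_prod scale mul (?S' i) ?N' = {0}"
    using o2.prod_iii by blast
  have c12: "set_prod scale mul ?N' ?N' \<subseteq> ?N" by (rule o2.prod_iv)
  show ?thesis
    unfolding Let_def
    apply (rule exI[of _ n], rule exI[of _ S], rule exI[of _ ?S'], rule exI[of _ ?N'])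
    apply (intro conjI)
               apply (fact c1)
              apply (fact c2)
             apply (fact c3)
            apply (fact c4)
           apply (fact c5)
          apply (fact ds0)
         apply (fact dsA1)
        apply (fact dsU)
       apply (fact c9)
      apply (fact c10)
     apply (fact c11)
    apply (fact c12)
    done
qed

end

theorem mainTheorem12:
  fixes scale :: "'k::field_char_0 \<Rightarrow> 'a::ab_group_add \<Rightarrow> 'a"
    and mul :: "'a \<Rightarrow> 'a \<Rightarrow> 'a"
    and A0 A1 :: "'a set"
    and B :: "'a \<Rightarrow> 'a \<Rightarrow> 'k"
  assumes "alg_closed TYPE('k)"
    and "fd_assoc_superalgebra scale mul A0 A1"
    and "odd_symmetric_structure scale mul A0 A1 B"
    and "semisimple_bimodule scale mul A0 A0"
  shows "\<exists>(n::nat) (S :: nat \<Rightarrow> 'a set) (S' :: nat \<Rightarrow> 'a set) (N' :: 'a set).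
     let N = Ann mul A0 in
     (\<forall>i<n. simple_ideal scale mul A0 (S i)) \<and>
     (\<forall>i<n. irreducible_sub_bimodule scale mul A0 A1 (S' i)) \<and>
     sub_bimodule scale mul A0 A1 N' \<and>
     set_prod scale mul A0 N' = {0} \<and> set_prod scale mul N' A0 = {0} \<and>
     internal_direct_sum scale A0 {..n} (\<lambda>i. if i < n then S i else N) \<and>
     internal_direct_sum scale A1 {..n} (\<lambda>i. if i < n then S' i else N') \<and>
     internal_direct_sum scale UNIV {..2*n+1}
       (\<lambda>k. if k < n then S k else if k = n then N
            else if k < 2*n+1 then S' (k - n - 1) else N') \<and>
     (\<forall>i<n. \<forall>j<n. i \<noteq> j \<longrightarrow>
        set_prod scale mul (S' i) (S' j) = {0} \<and> set_prod scale mul (S' j) (S' i) = {0}) \<and>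
     (\<forall>i<n. set_prod scale mul (S' i) (S' i) \<in> {{0}, S i}) \<and>
     (\<forall>i<n. set_prod scale mul N' (S' i) = {0} \<and> set_prod scale mul (S' i) N' = {0}) \<and>
     set_prod scale mul N' N' \<subseteq> N"
proof -
  have vs: "vector_space scale" and fs: "\<exists>Bs. finite Bs \<and> module.span scale Bs = UNIV"
    using assms(2) by (auto simp: fd_assoc_superalgebra_def)
  interpret v: vector_space scale by (rule vs)
  obtain Bs where Bs: "finite Bs" "v.span Bs = UNIV" using fs by blast
  obtain Bas where Bas: "v.independent Bas" "UNIV \<subseteq> v.span Bas"
    using v.basis_exists[of UNIV] by metis
  have fin: "finite Bas" using v.independent_span_bound[OF Bs(1) Bas(1)] Bs(2) by blast
  interpret f: finite_dimensional_vector_space scale Bas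
    by unfold_locales (use fin Bas in auto)
  interpret o: osa scale Bas mul A0 A1 B
    by unfold_locales (use assms in auto)
  show ?thesis by (rule o.main_osa)
qed


end
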